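(* Let $e$ be a real-valued random variable with $\mathbb{E}[e]=0$, and let $X$ be a stochastic process taking values in $L^2([0,1])$, defined on the same probability space. Let $\{\psi_\nu\}_{\nu\ge1}$ be an arbitrary fixed orthonormal basis of $L^2([0,1])$ and, for each $p\ge1$, let $X^p=\big(\langle X,\psi_1\rangle_{L^2},\ldots,\langle X,\psi_p\rangle_{L^2}\big)^{\top}\in\mathbb{R}^p$, where $\langle f,g\rangle_{L^2}=\int_0^1 f(t)g(t)\,dt$. Let $\mathbb{S}^p=\{\gamma\in\mathbb{R}^p:\|\gamma\|=1\}$ be the unit sphere in $\mathbb{R}^p$ (Euclidean norm). Then the following three statements are equivalent: (i) $\mathbb{E}\{e\mid X\}=0$ almost surely; (ii) for every $p\ge1$ and every $\gamma\in\mathbb{S}^p$, $\mathbb{E}\{e\mid \gamma^{\top}X^p\}=0$ almost surely; (iii) for every $p\ge 1$, every $\gamma\in\mathbb{S}^p$ and every $x\in\mathbb{R}$, $\mathbb{E}\{e\, I(\gamma^{\top}X^p\le x)\}=0$, where $I(\cdot)$ denotes the indicator function.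
   Context: $L^2([0,1])$ is the Hilbert space of square-integrable real functions on $[0,1]$; $X$ is viewed as a random element of this space, and conditioning on $X$ means conditioning on the $\sigma$-field generated by $\{X(t):0\le t\le 1\}$. *)

theory Defs
  imports "HOL-Probability.Probability"
begin

definition L2_01 :: "(real \<Rightarrow> real) \<Rightarrow> bool" where
  "L2_01 f \<longleftrightarrow> set_borel_measurable lborel {0..1} f \<and>
                 set_integrable lborel {0..1} (\<lambda>t. (f t)^2)"

definition L2_inner :: "(real \<Rightarrow> real) \<Rightarrow> (real \<Rightarrow> real) \<Rightarrow> real" where
  "L2_inner f g = set_lebesgue_integral lborel {0..1} (\<lambda>t. f t * g t)"

text \<open>An orthonormal basis (complete orthonormal system) of L2([0,1]), indexed from 0.\<close>
definition orthonormal_basis_L2 :: "(nat \<Rightarrow> real \<Rightarrow> real) \<Rightarrow> bool" where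
  "orthonormal_basis_L2 \<psi> \<longleftrightarrow>
     (\<forall>i. L2_01 (\<psi> i)) \<and>
     (\<forall>i j. L2_inner (\<psi> i) (\<psi> j) = (if i = j then 1 else 0)) \<and>
     (\<forall>f. L2_01 f \<and> (\<forall>i. L2_inner f (\<psi> i) = 0) \<longrightarrow>
          (AE t in lborel. t \<in> {0..1} \<longrightarrow> f t = 0))"

text \<open>The sigma-field generated by X viewed as a random element of L2([0,1]).\<close>
definition sigma_L2 :: "'a measure \<Rightarrow> ('a \<Rightarrow> real \<Rightarrow> real) \<Rightarrow> 'a measure" where
  "sigma_L2 M X = sigma (space M)
     {(\<lambda>\<omega>. L2_inner (X \<omega>) g) -` B \<inter> space M | g B. L2_01 g \<and> B \<in> sets borel}"

text \<open>gamma^T X^p, with X^p = (<X,psi_0>, ..., <X,psi_(p-1)>).\<close>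
definition proj :: "nat \<Rightarrow> (nat \<Rightarrow> real) \<Rightarrow> (nat \<Rightarrow> real \<Rightarrow> real) \<Rightarrow> (real \<Rightarrow> real) \<Rightarrow> real" where
  "proj p \<gamma> \<psi> f = (\<Sum>i<p. \<gamma> i * L2_inner f (\<psi> i))"

end

theory Submission
  imports Defs
begin


lemma int_push:
  fixes g Z :: "'a \<Rightarrow> real" and h :: "real \<Rightarrow> 'b::{banach, second_countable_topology}"
  assumes [measurable]: "g \<in> borel_measurable M" "Z \<in> borel_measurable M" "h \<in> borel_measurable borel"
    and "\<And>\<omega>. 0 \<le> g \<omega>"
  shows "integral\<^sup>L (distr (density M (\<lambda>\<omega>. ennreal (g \<omega>))) borel Z) h = (\<integral>\<omega>. g \<omega> *\<^sub>R h (Z \<omega>) \<partial>M)"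
proof -
  have "integral\<^sup>L (distr (density M (\<lambda>\<omega>. ennreal (g \<omega>))) borel Z) h
     = integral\<^sup>L (density M (\<lambda>\<omega>. ennreal (g \<omega>))) (\<lambda>\<omega>. h (Z \<omega>))"
    by (rule integral_distr) auto
  also have "\<dots> = (\<integral>\<omega>. g \<omega> *\<^sub>R h (Z \<omega>) \<partial>M)"
    by (rule integral_density) (auto simp: assms)
  finally show ?thesis .
qed

lemma bdd_integrable:
  fixes f :: "'a \<Rightarrow> real" and k :: "'a \<Rightarrow> 'b::{banach, second_countable_topology}"
  assumes "integrable M f" "k \<in> borel_measurable M" "\<And>\<omega>. norm (k \<omega>) \<le> K"
  shows "integrable M (\<lambda>\<omega>. f \<omega> *\<^sub>R k \<omega>)"
proof (rule Bochner_Integration.integrable_bound[of _ "\<lambda>\<omega>. K * f \<omega>"])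
  show "integrable M (\<lambda>\<omega>. K * f \<omega>)" using assms by auto
  show "(\<lambda>\<omega>. f \<omega> *\<^sub>R k \<omega>) \<in> borel_measurable M" using assms by measurable
  have K: "0 \<le> K" using assms(3) norm_ge_zero order_trans by blast
  show "AE x in M. norm (f x *\<^sub>R k x) \<le> norm (K * f x)"
  proof (intro AE_I2)
    fix x
    have "\<bar>f x\<bar> * norm (k x) \<le> \<bar>f x\<bar> * K" using assms(3) by (intro mult_left_mono) auto
    then show "norm (f x *\<^sub>R k x) \<le> norm (K * f x)" using K by (simp add: abs_mult mult.commute)
  qed
qed

lemma distr_eq_integral_zero:
  fixes f Z :: "'a \<Rightarrow> real" and h :: "real \<Rightarrow> 'b::{banach, second_countable_topology}"
  assumes f: "integrable M f" and [measurable]: "Z \<in> borel_measurable M" "h \<in> borel_measurable borel"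
    and bd: "\<And>y. norm (h y) \<le> K"
    and eq: "distr (density M (\<lambda>\<omega>. ennreal (max (f \<omega>) 0))) borel Z
           = distr (density M (\<lambda>\<omega>. ennreal (max (- f \<omega>) 0))) borel Z"
  shows "(\<integral>\<omega>. f \<omega> *\<^sub>R h (Z \<omega>) \<partial>M) = 0"
proof -
  have [measurable]: "f \<in> borel_measurable M" using f by auto
  have i1: "integrable M (\<lambda>\<omega>. max (f \<omega>) 0 *\<^sub>R h (Z \<omega>))"
    by (rule bdd_integrable[OF _ _ bd]) (auto simp: f)
  have i2: "integrable M (\<lambda>\<omega>. max (- f \<omega>) 0 *\<^sub>R h (Z \<omega>))"
    by (rule bdd_integrable[OF _ _ bd]) (auto simp: f)
  have "(\<integral>\<omega>. f \<omega> *\<^sub>R h (Z \<omega>) \<partial>M)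
     = (\<integral>\<omega>. max (f \<omega>) 0 *\<^sub>R h (Z \<omega>) - max (- f \<omega>) 0 *\<^sub>R h (Z \<omega>) \<partial>M)"
    by (intro Bochner_Integration.integral_cong refl) (simp add: max_def scaleR_diff_left[symmetric])
  also have "\<dots> = (\<integral>\<omega>. max (f \<omega>) 0 *\<^sub>R h (Z \<omega>) \<partial>M) - (\<integral>\<omega>. max (- f \<omega>) 0 *\<^sub>R h (Z \<omega>) \<partial>M)"
    using i1 i2 by simp
  also have "(\<integral>\<omega>. max (f \<omega>) 0 *\<^sub>R h (Z \<omega>) \<partial>M) = (\<integral>\<omega>. max (- f \<omega>) 0 *\<^sub>R h (Z \<omega>) \<partial>M)"
    using int_push[of "\<lambda>\<omega>. max (f \<omega>) 0" M Z h] int_push[of "\<lambda>\<omega>. max (- f \<omega>) 0" M Z h] eq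
    by simp
  finally show ?thesis by simp
qed

lemma finite_borel_distr_density:
  fixes f Z :: "'a \<Rightarrow> real"
  assumes f: "integrable M f" and [measurable]: "Z \<in> borel_measurable M"
  shows "finite_borel_measure (distr (density M (\<lambda>\<omega>. ennreal (max (f \<omega>) 0))) borel Z)"
proof -
  have [measurable]: "f \<in> borel_measurable M" using f by auto
  have "emeasure (density M (\<lambda>\<omega>. ennreal (max (f \<omega>) 0))) (space M) < \<infinity>"
  proof -
    have "emeasure (density M (\<lambda>\<omega>. ennreal (max (f \<omega>) 0))) (space M)
       = (\<integral>\<^sup>+\<omega>. ennreal (max (f \<omega>) 0) \<partial>M)"
      by (subst emeasure_density) (auto intro!: nn_integral_cong)
    also have "\<dots> \<le> (\<integral>\<^sup>+\<omega>. ennreal (norm (f \<omega>)) \<partial>M)"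
      by (intro nn_integral_mono) auto
    also have "\<dots> < \<infinity>" using f by (simp add: integrable_iff_bounded)
    finally show ?thesis .
  qed
  then have "finite_measure (density M (\<lambda>\<omega>. ennreal (max (f \<omega>) 0)))"
    by (intro finite_measureI) auto
  then have "finite_measure (distr (density M (\<lambda>\<omega>. ennreal (max (f \<omega>) 0))) borel Z)"
    by (rule finite_measure.finite_measure_distr) simp
  then show ?thesis unfolding finite_borel_measure_def finite_borel_measure_axioms_def by simp
qed

lemma cdf_push:
  fixes f Z :: "'a \<Rightarrow> real"
  assumes f: "integrable M f" and [measurable]: "Z \<in> borel_measurable M"
  shows "cdf (distr (density M (\<lambda>\<omega>. ennreal (max (f \<omega>) 0))) borel Z) x
       = (\<integral>\<omega>. max (f \<omega>) 0 * indicator {..x} (Z \<omega>) \<partial>M)"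
proof -
  have [measurable]: "f \<in> borel_measurable M" using f by auto
  have "cdf (distr (density M (\<lambda>\<omega>. ennreal (max (f \<omega>) 0))) borel Z) x
     = integral\<^sup>L (distr (density M (\<lambda>\<omega>. ennreal (max (f \<omega>) 0))) borel Z) (indicator {..x})"
    unfolding cdf_def by simp
  also have "\<dots> = (\<integral>\<omega>. max (f \<omega>) 0 *\<^sub>R (indicator {..x} (Z \<omega>) :: real) \<partial>M)"
    by (rule int_push) auto
  finally show ?thesis by simp
qed

lemma halflines_distr_eq:
  fixes f Z :: "'a \<Rightarrow> real"
  assumes f: "integrable M f" and Zm[measurable]: "Z \<in> borel_measurable M"
    and H: "\<And>x. (\<integral>\<omega>. f \<omega> * indicator {\<omega>\<in>space M. Z \<omega> \<le> x} \<omega> \<partial>M) = 0"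
  shows "distr (density M (\<lambda>\<omega>. ennreal (max (f \<omega>) 0))) borel Z
       = distr (density M (\<lambda>\<omega>. ennreal (max (- f \<omega>) 0))) borel Z"
proof (rule cdf_unique')
  have [measurable]: "f \<in> borel_measurable M" using f by auto
  show "finite_borel_measure (distr (density M (\<lambda>\<omega>. ennreal (max (f \<omega>) 0))) borel Z)"
    by (rule finite_borel_distr_density[OF f Zm])
  show "finite_borel_measure (distr (density M (\<lambda>\<omega>. ennreal (max (- f \<omega>) 0))) borel Z)"
    using finite_borel_distr_density[of M "\<lambda>\<omega>. - f \<omega>" Z] f by simp
  show "cdf (distr (density M (\<lambda>\<omega>. ennreal (max (f \<omega>) 0))) borel Z)
      = cdf (distr (density M (\<lambda>\<omega>. ennreal (max (- f \<omega>) 0))) borel Z)"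
  proof
    fix x
    have i1: "integrable M (\<lambda>\<omega>. max (f \<omega>) 0 *\<^sub>R (indicator {..x} (Z \<omega>) :: real))"
      by (rule bdd_integrable[where K=1]) (auto simp: f)
    have i2: "integrable M (\<lambda>\<omega>. max (- f \<omega>) 0 *\<^sub>R (indicator {..x} (Z \<omega>) :: real))"
      by (rule bdd_integrable[where K=1]) (auto simp: f)
    have "(\<integral>\<omega>. max (f \<omega>) 0 * indicator {..x} (Z \<omega>) \<partial>M) - (\<integral>\<omega>. max (- f \<omega>) 0 * indicator {..x} (Z \<omega>) \<partial>M)
       = (\<integral>\<omega>. max (f \<omega>) 0 * indicator {..x} (Z \<omega>) - max (- f \<omega>) 0 * indicator {..x} (Z \<omega>) \<partial>M)"
      using i1 i2 by simp
    also have "\<dots> = (\<integral>\<omega>. f \<omega> * indicator {\<omega>\<in>space M. Z \<omega> \<le> x} \<omega> \<partial>M)"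
      by (intro Bochner_Integration.integral_cong refl) (auto simp: indicator_def max_def)
    finally show "cdf (distr (density M (\<lambda>\<omega>. ennreal (max (f \<omega>) 0))) borel Z) x
      = cdf (distr (density M (\<lambda>\<omega>. ennreal (max (- f \<omega>) 0))) borel Z) x"
      using cdf_push[OF f Zm, of x] cdf_push[of M "\<lambda>\<omega>. - f \<omega>" Z x] f H[of x] by simp
  qed
qed

lemma distr_density_scale:
  fixes g1 g2 Z :: "'a \<Rightarrow> real"
  assumes [measurable]: "g1 \<in> borel_measurable M" "g2 \<in> borel_measurable M" "Z \<in> borel_measurable M"
    and c: "c > 0" and nn: "\<And>\<omega>. 0 \<le> g1 \<omega>" "\<And>\<omega>. 0 \<le> g2 \<omega>"
    and eq: "distr (density M (\<lambda>\<omega>. ennreal (g1 \<omega> / c))) borel Z = distr (density M (\<lambda>\<omega>. ennreal (g2 \<omega> / c))) borel Z"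
  shows "distr (density M (\<lambda>\<omega>. ennreal (g1 \<omega>))) borel Z = distr (density M (\<lambda>\<omega>. ennreal (g2 \<omega>))) borel Z"
proof (rule measure_eqI)
  show "sets (distr (density M (\<lambda>\<omega>. ennreal (g1 \<omega>))) borel Z) = sets (distr (density M (\<lambda>\<omega>. ennreal (g2 \<omega>))) borel Z)"
    by simp
  fix B assume "B \<in> sets (distr (density M (\<lambda>\<omega>. ennreal (g1 \<omega>))) borel Z)"
  then have B[measurable]: "B \<in> sets borel" by simp
  have key: "emeasure (distr (density M (\<lambda>\<omega>. ennreal (g \<omega>))) borel Z) B
      = ennreal c * emeasure (distr (density M (\<lambda>\<omega>. ennreal (g \<omega> / c))) borel Z) B"
    if [measurable]: "g \<in> borel_measurable M" and gnn: "\<And>\<omega>. 0 \<le> g \<omega>" for g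
  proof -
    have "emeasure (distr (density M (\<lambda>\<omega>. ennreal (g \<omega>))) borel Z) B
        = (\<integral>\<^sup>+\<omega>. ennreal (g \<omega>) * indicator (Z -` B \<inter> space M) \<omega> \<partial>M)"
      by (simp add: emeasure_distr emeasure_density)
    also have "\<dots> = (\<integral>\<^sup>+\<omega>. ennreal c * (ennreal (g \<omega> / c) * indicator (Z -` B \<inter> space M) \<omega>) \<partial>M)"
    proof (intro nn_integral_cong)
      fix \<omega>
      have "ennreal (g \<omega>) = ennreal c * ennreal (g \<omega> / c)"
        using c gnn[of \<omega>] by (simp add: ennreal_mult[symmetric])
      then show "ennreal (g \<omega>) * indicator (Z -` B \<inter> space M) \<omega> = ennreal c * (ennreal (g \<omega> / c) * indicator (Z -` B \<inter> space M) \<omega>)"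
        by (simp add: mult.assoc)
    qed
    also have "\<dots> = ennreal c * (\<integral>\<^sup>+\<omega>. ennreal (g \<omega> / c) * indicator (Z -` B \<inter> space M) \<omega> \<partial>M)"
      by (rule nn_integral_cmult) simp
    also have "\<dots> = ennreal c * emeasure (distr (density M (\<lambda>\<omega>. ennreal (g \<omega> / c))) borel Z) B"
      by (simp add: emeasure_distr emeasure_density)
    finally show ?thesis .
  qed
  show "emeasure (distr (density M (\<lambda>\<omega>. ennreal (g1 \<omega>))) borel Z) B = emeasure (distr (density M (\<lambda>\<omega>. ennreal (g2 \<omega>))) borel Z) B"
    using key[of g1] key[of g2] nn eq by simp
qed

lemma signed_levy:
  fixes f Z :: "'a \<Rightarrow> real"
  assumes f: "integrable M f" and Zm[measurable]: "Z \<in> borel_measurable M"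
    and H: "\<And>\<tau>. (\<integral>\<omega>. f \<omega> *\<^sub>R iexp (\<tau> * Z \<omega>) \<partial>M) = 0"
  shows "distr (density M (\<lambda>\<omega>. ennreal (max (f \<omega>) 0))) borel Z
       = distr (density M (\<lambda>\<omega>. ennreal (max (- f \<omega>) 0))) borel Z"
proof -
  have [measurable]: "f \<in> borel_measurable M" using f by auto
  have ip: "integrable M (\<lambda>\<omega>. max (f \<omega>) 0)" using f by auto
  have im: "integrable M (\<lambda>\<omega>. max (- f \<omega>) 0)" using f by auto
  have "(\<integral>\<omega>. f \<omega> *\<^sub>R (1::complex) \<partial>M) = 0" using H[of 0] by simp
  then have "complex_of_real (\<integral>\<omega>. f \<omega> \<partial>M) = 0"
    by (simp add: scaleR_conv_of_real)
  then have f0: "(\<integral>\<omega>. f \<omega> \<partial>M) = 0" by simp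
  define m where "m = (\<integral>\<omega>. max (f \<omega>) 0 \<partial>M)"
  have "(\<integral>\<omega>. f \<omega> \<partial>M) = (\<integral>\<omega>. max (f \<omega>) 0 - max (- f \<omega>) 0 \<partial>M)"
    by (intro Bochner_Integration.integral_cong) (auto simp: max_def)
  also have "\<dots> = m - (\<integral>\<omega>. max (- f \<omega>) 0 \<partial>M)" using ip im m_def by simp
  finally have m': "(\<integral>\<omega>. max (- f \<omega>) 0 \<partial>M) = m" using f0 by simp
  have m0: "0 \<le> m" unfolding m_def by (intro integral_nonneg_AE) auto
  show ?thesis
  proof (cases "m = 0")
    case True
    have "AE \<omega> in M. max (f \<omega>) 0 = 0"
      using integral_nonneg_eq_0_iff_AE[OF ip] True m_def by simp
    moreover have "AE \<omega> in M. max (- f \<omega>) 0 = 0"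
      using integral_nonneg_eq_0_iff_AE[OF im] True m' by simp
    ultimately have "density M (\<lambda>\<omega>. ennreal (max (f \<omega>) 0)) = density M (\<lambda>\<omega>. ennreal (max (- f \<omega>) 0))"
      by (intro density_cong) auto
    then show ?thesis by simp
  next
    case False
    with m0 have mpos: "m > 0" by simp
    define P1 where "P1 = distr (density M (\<lambda>\<omega>. ennreal (max (f \<omega>) 0 / m))) borel Z"
    define P2 where "P2 = distr (density M (\<lambda>\<omega>. ennreal (max (- f \<omega>) 0 / m))) borel Z"
    have rd: "real_distribution (distr (density M (\<lambda>\<omega>. ennreal (g \<omega> / m))) borel Z)"
      if gi: "integrable M g" and gnn: "\<And>\<omega>. 0 \<le> g \<omega>" and gm: "(\<integral>\<omega>. g \<omega> \<partial>M) = m" for g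
    proof -
      have [measurable]: "g \<in> borel_measurable M" using gi by auto
      have "emeasure (distr (density M (\<lambda>\<omega>. ennreal (g \<omega> / m))) borel Z) UNIV
          = emeasure (density M (\<lambda>\<omega>. ennreal (g \<omega> / m))) (space M)"
        by (subst emeasure_distr) auto
      also have "\<dots> = (\<integral>\<^sup>+\<omega>. ennreal (g \<omega> / m) \<partial>M)"
        by (subst emeasure_density) (auto intro!: nn_integral_cong)
      also have "\<dots> = ennreal (\<integral>\<omega>. g \<omega> / m \<partial>M)"
        by (rule nn_integral_eq_integral) (use gi gnn mpos in auto)
      also have "\<dots> = 1" using gm mpos by simp
      finally have "emeasure (distr (density M (\<lambda>\<omega>. ennreal (g \<omega> / m))) borel Z) UNIV = 1" .
      then have "prob_space (distr (density M (\<lambda>\<omega>. ennreal (g \<omega> / m))) borel Z)"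
        by (intro prob_spaceI) simp
      then show ?thesis unfolding real_distribution_def real_distribution_axioms_def by simp
    qed
    have r1: "real_distribution P1" unfolding P1_def by (rule rd[OF ip]) (auto simp: m_def)
    have r2: "real_distribution P2" unfolding P2_def by (rule rd[OF im]) (auto simp: m')
    have ch: "char (distr (density M (\<lambda>\<omega>. ennreal (g \<omega> / m))) borel Z) \<tau>
        = (\<integral>\<omega>. (g \<omega> / m) *\<^sub>R iexp (\<tau> * Z \<omega>) \<partial>M)"
      if [measurable]: "g \<in> borel_measurable M" and gnn: "\<And>\<omega>. 0 \<le> g \<omega>" for g \<tau>
      unfolding char_def by (rule int_push) (use gnn mpos in auto)
    have "char P1 = char P2"
    proof
      fix \<tau>
      have j1: "integrable M (\<lambda>\<omega>. (max (f \<omega>) 0 / m) *\<^sub>R iexp (\<tau> * Z \<omega>))"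
        by (rule bdd_integrable[where K=1]) (use ip in auto)
      have j2: "integrable M (\<lambda>\<omega>. (max (- f \<omega>) 0 / m) *\<^sub>R iexp (\<tau> * Z \<omega>))"
        by (rule bdd_integrable[where K=1]) (use im in auto)
      have "(\<integral>\<omega>. (max (f \<omega>) 0 / m) *\<^sub>R iexp (\<tau> * Z \<omega>) \<partial>M) - (\<integral>\<omega>. (max (- f \<omega>) 0 / m) *\<^sub>R iexp (\<tau> * Z \<omega>) \<partial>M)
         = (\<integral>\<omega>. (max (f \<omega>) 0 / m) *\<^sub>R iexp (\<tau> * Z \<omega>) - (max (- f \<omega>) 0 / m) *\<^sub>R iexp (\<tau> * Z \<omega>) \<partial>M)"
        using j1 j2 by simp
      also have "\<dots> = (\<integral>\<omega>. (1 / m) *\<^sub>R (f \<omega> *\<^sub>R iexp (\<tau> * Z \<omega>)) \<partial>M)"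
        by (intro Bochner_Integration.integral_cong refl) (auto simp: max_def scaleR_diff_left[symmetric] diff_divide_distrib[symmetric])
      also have "\<dots> = (1 / m) *\<^sub>R (\<integral>\<omega>. f \<omega> *\<^sub>R iexp (\<tau> * Z \<omega>) \<partial>M)"
        by (rule integral_scaleR_right)
      also have "\<dots> = 0" using H by simp
      finally show "char P1 \<tau> = char P2 \<tau>"
        unfolding P1_def P2_def using ch[of "\<lambda>\<omega>. max (f \<omega>) 0" \<tau>] ch[of "\<lambda>\<omega>. max (- f \<omega>) 0" \<tau>] by simp
    qed
    then have "P1 = P2" using Levy_uniqueness[OF r1 r2] by simp
    then have eqP: "distr (density M (\<lambda>\<omega>. ennreal (max (f \<omega>) 0 / m))) borel Z
       = distr (density M (\<lambda>\<omega>. ennreal (max (- f \<omega>) 0 / m))) borel Z"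
      unfolding P1_def P2_def .
    show ?thesis
      by (rule distr_density_scale[OF _ _ Zm mpos _ _ eqP]) simp_all
  qed
qed



lemma bdd_integrable_c:
  fixes w :: "'a \<Rightarrow> complex" and k :: "'a \<Rightarrow> complex"
  assumes "integrable M w" "k \<in> borel_measurable M" "\<And>\<omega>. norm (k \<omega>) \<le> 1"
  shows "integrable M (\<lambda>\<omega>. w \<omega> * k \<omega>)"
proof (rule Bochner_Integration.integrable_bound[of _ "w"])
  show "integrable M w" using assms by auto
  show "(\<lambda>\<omega>. w \<omega> * k \<omega>) \<in> borel_measurable M" using assms by measurable
  show "AE x in M. norm (w x * k x) \<le> norm (w x)"
  proof (intro AE_I2)
    fix x
    have "norm (w x) * norm (k x) \<le> norm (w x) * 1" using assms(3) by (intro mult_left_mono) auto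
    then show "norm (w x * k x) \<le> norm (w x)" by (simp add: norm_mult)
  qed
qed

lemma cnj_iexp: "cnj (iexp t) = iexp (- t)"
  by (simp add: exp_cnj)

lemma norm_iexp: "norm (iexp t) = 1"
  by simp

lemma re_id: "complex_of_real (Re z) * u = (z * u + cnj (z * cnj u)) / 2"
  by (simp add: complex_eq_iff algebra_simps)

lemma im_id: "complex_of_real (Im z) * u = (z * u - cnj (z * cnj u)) / (2 * \<i>)"
proof -
  have "z * u - cnj (z * cnj u) = (z - cnj z) * u" by (simp add: algebra_simps)
  moreover have "(z - cnj z) / (2 * \<i>) = complex_of_real (Im z)"
    by (simp add: complex_eq_iff Re_divide Im_divide)
  ultimately show ?thesis by (metis mult.commute times_divide_eq_right)
qed

lemma lin_cnj_aux:
  fixes A B :: "'a \<Rightarrow> complex"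
  assumes "integrable M A" "integrable M B"
  shows "(\<integral>\<omega>. (A \<omega> + cnj (B \<omega>)) / c \<partial>M) = ((\<integral>\<omega>. A \<omega> \<partial>M) + cnj (\<integral>\<omega>. B \<omega> \<partial>M)) / c"
    and "(\<integral>\<omega>. (A \<omega> - cnj (B \<omega>)) / c \<partial>M) = ((\<integral>\<omega>. A \<omega> \<partial>M) - cnj (\<integral>\<omega>. B \<omega> \<partial>M)) / c"
proof -
  have cB: "integrable M (\<lambda>\<omega>. cnj (B \<omega>))" using assms(2) by (rule integrable_cnj)
  show "(\<integral>\<omega>. (A \<omega> + cnj (B \<omega>)) / c \<partial>M) = ((\<integral>\<omega>. A \<omega> \<partial>M) + cnj (\<integral>\<omega>. B \<omega> \<partial>M)) / c"
    by (simp add: Bochner_Integration.integral_add[OF assms(1) cB] integral_divide_zero)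
  show "(\<integral>\<omega>. (A \<omega> - cnj (B \<omega>)) / c \<partial>M) = ((\<integral>\<omega>. A \<omega> \<partial>M) - cnj (\<integral>\<omega>. B \<omega> \<partial>M)) / c"
    by (simp add: Bochner_Integration.integral_diff[OF assms(1) cB] integral_divide_zero)
qed

lemma complex_1d:
  fixes w :: "'a \<Rightarrow> complex" and Z :: "'a \<Rightarrow> real"
  assumes w: "integrable M w" and Zm[measurable]: "Z \<in> borel_measurable M"
    and H: "\<And>\<tau>. (\<integral>\<omega>. w \<omega> * iexp (\<tau> * Z \<omega>) \<partial>M) = 0"
    and B: "B \<in> sets borel"
  shows "(\<integral>\<omega>. w \<omega> * indicator B (Z \<omega>) \<partial>M) = 0"
proof -
  have [measurable]: "w \<in> borel_measurable M" using w by auto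
  have iw: "integrable M (\<lambda>\<omega>. w \<omega> * iexp (\<tau> * Z \<omega>))" for \<tau>
    by (rule bdd_integrable_c[OF w]) auto
  have icw: "integrable M (\<lambda>\<omega>. cnj (w \<omega> * iexp (\<tau> * Z \<omega>)))" for \<tau>
    using iw[of \<tau>] by (rule integrable_cnj)
  have ia: "integrable M (\<lambda>\<omega>. Re (w \<omega>))" using w by auto
  have ib: "integrable M (\<lambda>\<omega>. Im (w \<omega>))" using w by auto
  have Ha: "(\<integral>\<omega>. Re (w \<omega>) *\<^sub>R iexp (\<tau> * Z \<omega>) \<partial>M) = 0" for \<tau>
  proof -
    have "(\<integral>\<omega>. Re (w \<omega>) *\<^sub>R iexp (\<tau> * Z \<omega>) \<partial>M)
        = (\<integral>\<omega>. (w \<omega> * iexp (\<tau> * Z \<omega>) + cnj (w \<omega> * iexp ((- \<tau>) * Z \<omega>))) / 2 \<partial>M)"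
    proof (intro Bochner_Integration.integral_cong refl)
      fix \<omega>
      have "cnj (iexp ((- \<tau>) * Z \<omega>)) = iexp (\<tau> * Z \<omega>)" using cnj_iexp[of "(- \<tau>) * Z \<omega>"] by simp
      then show "Re (w \<omega>) *\<^sub>R iexp (\<tau> * Z \<omega>) = (w \<omega> * iexp (\<tau> * Z \<omega>) + cnj (w \<omega> * iexp ((- \<tau>) * Z \<omega>))) / 2"
        using re_id[of "w \<omega>" "iexp (\<tau> * Z \<omega>)"] by (simp add: scaleR_conv_of_real cnj_iexp)
    qed
    also have "\<dots> = ((\<integral>\<omega>. w \<omega> * iexp (\<tau> * Z \<omega>) \<partial>M) + cnj (\<integral>\<omega>. w \<omega> * iexp ((- \<tau>) * Z \<omega>) \<partial>M)) / 2"
      by (rule lin_cnj_aux(1)[OF iw iw])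
    also have "\<dots> = 0" using H[of \<tau>] H[of "- \<tau>"] by simp
    finally show ?thesis .
  qed
  have Hb: "(\<integral>\<omega>. Im (w \<omega>) *\<^sub>R iexp (\<tau> * Z \<omega>) \<partial>M) = 0" for \<tau>
  proof -
    have "(\<integral>\<omega>. Im (w \<omega>) *\<^sub>R iexp (\<tau> * Z \<omega>) \<partial>M)
        = (\<integral>\<omega>. (w \<omega> * iexp (\<tau> * Z \<omega>) - cnj (w \<omega> * iexp ((- \<tau>) * Z \<omega>))) / (2 * \<i>) \<partial>M)"
    proof (intro Bochner_Integration.integral_cong refl)
      fix \<omega>
      have "cnj (iexp ((- \<tau>) * Z \<omega>)) = iexp (\<tau> * Z \<omega>)" using cnj_iexp[of "(- \<tau>) * Z \<omega>"] by simp
      then show "Im (w \<omega>) *\<^sub>R iexp (\<tau> * Z \<omega>) = (w \<omega> * iexp (\<tau> * Z \<omega>) - cnj (w \<omega> * iexp ((- \<tau>) * Z \<omega>))) / (2 * \<i>)"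
        using im_id[of "w \<omega>" "iexp (\<tau> * Z \<omega>)"] by (simp add: scaleR_conv_of_real cnj_iexp)
    qed
    also have "\<dots> = ((\<integral>\<omega>. w \<omega> * iexp (\<tau> * Z \<omega>) \<partial>M) - cnj (\<integral>\<omega>. w \<omega> * iexp ((- \<tau>) * Z \<omega>) \<partial>M)) / (2 * \<i>)"
      by (rule lin_cnj_aux(2)[OF iw iw])
    also have "\<dots> = 0" using H[of \<tau>] H[of "- \<tau>"] by simp
    finally show ?thesis .
  qed
  have a0: "(\<integral>\<omega>. Re (w \<omega>) *\<^sub>R indicator B (Z \<omega>) \<partial>M) = (0::real)"
    by (rule distr_eq_integral_zero[OF ia Zm _ _ signed_levy[OF ia Zm Ha], where K=1]) (auto simp: B intro: borel_measurable_indicator)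
  have b0: "(\<integral>\<omega>. Im (w \<omega>) *\<^sub>R indicator B (Z \<omega>) \<partial>M) = (0::real)"
    by (rule distr_eq_integral_zero[OF ib Zm _ _ signed_levy[OF ib Zm Hb], where K=1]) (auto simp: B intro: borel_measurable_indicator)
  have indm: "(\<lambda>\<omega>. indicator B (Z \<omega>) :: real) \<in> borel_measurable M"
    by (rule measurable_compose[OF Zm borel_measurable_indicator[OF B]])
  have ja: "integrable M (\<lambda>\<omega>. Re (w \<omega>) *\<^sub>R (indicator B (Z \<omega>) :: real))"
    by (rule bdd_integrable[OF ia indm, where K=1]) auto
  have jb: "integrable M (\<lambda>\<omega>. Im (w \<omega>) *\<^sub>R (indicator B (Z \<omega>) :: real))"
    by (rule bdd_integrable[OF ib indm, where K=1]) auto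
  define ra where "ra = (\<lambda>\<omega>. Re (w \<omega>) *\<^sub>R (indicator B (Z \<omega>) :: real))"
  define rb where "rb = (\<lambda>\<omega>. Im (w \<omega>) *\<^sub>R (indicator B (Z \<omega>) :: real))"
  have ja': "integrable M (\<lambda>\<omega>. complex_of_real (ra \<omega>))" using ja unfolding ra_def by (rule integrable_of_real)
  have jb': "integrable M (\<lambda>\<omega>. \<i> * complex_of_real (rb \<omega>))" using jb unfolding rb_def by (intro integrable_mult_right integrable_of_real)
  have "(\<integral>\<omega>. w \<omega> * indicator B (Z \<omega>) \<partial>M)
      = (\<integral>\<omega>. complex_of_real (ra \<omega>) + \<i> * complex_of_real (rb \<omega>) \<partial>M)"
    by (intro Bochner_Integration.integral_cong refl) (simp add: complex_eq_iff indicator_def ra_def rb_def)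
  also have "\<dots> = complex_of_real (\<integral>\<omega>. ra \<omega> \<partial>M) + \<i> * complex_of_real (\<integral>\<omega>. rb \<omega> \<partial>M)"
    unfolding Bochner_Integration.integral_add[OF ja' jb'] integral_mult_right_zero integral_complex_of_real ..
  also have "\<dots> = 0" using a0 b0 unfolding ra_def rb_def by simp
  finally show ?thesis .
qed

lemma prod_ind:
  assumes "finite I"
  shows "(\<Prod>i\<in>I. indicator {..x i} (Y i \<omega>) :: real) = (if \<forall>i\<in>I. Y i \<omega> \<le> x i then 1 else 0)"
  using assms by (induction I rule: finite_induct) (auto simp: indicator_def)

lemma prod_ind_bound:
  assumes "finite I"
  shows "norm (\<Prod>i\<in>I. indicator {..x i} (Y i \<omega>) :: real) \<le> 1"
  using prod_ind[OF assms, of x Y \<omega>] by simp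

lemma iexp_measurable[measurable]: "iexp \<in> borel_measurable borel"
  by (intro borel_measurable_continuous_onI continuous_at_imp_continuous_on) auto

lemma iexp_add: "iexp (a + b) = iexp a * iexp b"
  by (simp add: distrib_left exp_add)

lemma multi_indicator:
  fixes e :: "'a \<Rightarrow> real" and Y :: "nat \<Rightarrow> 'a \<Rightarrow> real"
  assumes e: "integrable M e" and Ym[measurable]: "\<And>i. Y i \<in> borel_measurable M"
    and H: "\<And>J t x. finite J \<Longrightarrow> (\<integral>\<omega>. e \<omega> * indicator {\<omega>\<in>space M. (\<Sum>j\<in>J. t j * Y j \<omega>) \<le> x} \<omega> \<partial>M) = 0"
    and I: "finite I"
  shows "(\<integral>\<omega>. e \<omega> * indicator {\<omega>\<in>space M. \<forall>i\<in>I. Y i \<omega> \<le> x i} \<omega> \<partial>M) = 0"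
proof -
  have [measurable]: "e \<in> borel_measurable M" using e by auto
  have H0: "(\<integral>\<omega>. e \<omega> *\<^sub>R iexp (\<Sum>j\<in>J. t j * Y j \<omega>) \<partial>M) = 0" if J: "finite J" for J t
  proof -
    have Sm: "(\<lambda>\<omega>. \<Sum>j\<in>J. t j * Y j \<omega>) \<in> borel_measurable M" by measurable
    show ?thesis
      by (rule distr_eq_integral_zero[OF e Sm iexp_measurable _ halflines_distr_eq[OF e Sm H[OF J]], where K=1]) simp
  qed
  have Q: "\<And>J x t. finite J \<Longrightarrow> I \<inter> J = {} \<Longrightarrow>
      (\<integral>\<omega>. (e \<omega> * (\<Prod>i\<in>I. indicator {..x i} (Y i \<omega>))) *\<^sub>R iexp (\<Sum>j\<in>J. t j * Y j \<omega>) \<partial>M) = 0"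
    using I
  proof (induction I rule: finite_induct)
    case empty
    then show ?case using H0 by simp
  next
    case (insert k I)
    define w where "w = (\<lambda>\<omega>. (e \<omega> * (\<Prod>i\<in>I. indicator {..x i} (Y i \<omega>))) *\<^sub>R iexp (\<Sum>j\<in>J. t j * Y j \<omega>))"
    have wi: "integrable M w"
    proof -
      have "integrable M (\<lambda>\<omega>. e \<omega> *\<^sub>R (complex_of_real (\<Prod>i\<in>I. indicator {..x i} (Y i \<omega>)) * iexp (\<Sum>j\<in>J. t j * Y j \<omega>)))"
      proof (rule bdd_integrable[OF e, where K=1])
        show "(\<lambda>\<omega>. complex_of_real (\<Prod>i\<in>I. indicator {..x i} (Y i \<omega>)) * iexp (\<Sum>j\<in>J. t j * Y j \<omega>)) \<in> borel_measurable M"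
          by measurable
        fix \<omega>
        have "norm (complex_of_real (\<Prod>i\<in>I. indicator {..x i} (Y i \<omega>)) * iexp (\<Sum>j\<in>J. t j * Y j \<omega>))
          = norm (\<Prod>i\<in>I. indicator {..x i} (Y i \<omega>) :: real)"
          unfolding norm_mult norm_of_real by simp
        also have "\<dots> \<le> 1" by (rule prod_ind_bound[OF insert(1)])
        finally show "norm (complex_of_real (\<Prod>i\<in>I. indicator {..x i} (Y i \<omega>)) * iexp (\<Sum>j\<in>J. t j * Y j \<omega>)) \<le> 1" .
      qed
      then show ?thesis unfolding w_def by (simp add: scaleR_conv_of_real mult.assoc)
    qed
    have Hw: "(\<integral>\<omega>. w \<omega> * iexp (\<tau> * Y k \<omega>) \<partial>M) = 0" for \<tau>
    proof -
      have fJ: "finite (insert k J)" using insert by simp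
      have dJ: "I \<inter> insert k J = {}" using insert by auto
      have kJ: "k \<notin> J" using insert by auto
      have sum_eq: "(\<Sum>j\<in>insert k J. (t(k := \<tau>)) j * Y j \<omega>) = \<tau> * Y k \<omega> + (\<Sum>j\<in>J. t j * Y j \<omega>)" for \<omega>
        using kJ by (simp add: sum.insert[OF \<open>finite J\<close> kJ]) (intro sum.cong, auto)
      have "(\<integral>\<omega>. w \<omega> * iexp (\<tau> * Y k \<omega>) \<partial>M)
         = (\<integral>\<omega>. (e \<omega> * (\<Prod>i\<in>I. indicator {..x i} (Y i \<omega>))) *\<^sub>R iexp (\<Sum>j\<in>insert k J. (t(k := \<tau>)) j * Y j \<omega>) \<partial>M)"
        by (intro Bochner_Integration.integral_cong refl)
          (unfold w_def sum_eq iexp_add, simp add: scaleR_conv_of_real ac_simps)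
      also have "\<dots> = 0" by (rule insert(3)[OF fJ dJ])
      finally show ?thesis .
    qed
    have "(\<integral>\<omega>. w \<omega> * indicator {..x k} (Y k \<omega>) \<partial>M) = 0"
      by (rule complex_1d[OF wi Ym Hw]) simp
    moreover have "(\<integral>\<omega>. (e \<omega> * (\<Prod>i\<in>insert k I. indicator {..x i} (Y i \<omega>))) *\<^sub>R iexp (\<Sum>j\<in>J. t j * Y j \<omega>) \<partial>M)
        = (\<integral>\<omega>. w \<omega> * indicator {..x k} (Y k \<omega>) \<partial>M)"
      by (intro Bochner_Integration.integral_cong refl)
        (simp add: w_def prod.insert[OF insert(1,2)] scaleR_conv_of_real mult.commute mult.left_commute indicator_def)
    ultimately show ?case by simp
  qed
  define P where "P = (\<lambda>\<omega>. e \<omega> * (\<Prod>i\<in>I. indicator {..x i} (Y i \<omega>)) :: real)"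
  have "(\<integral>\<omega>. P \<omega> *\<^sub>R iexp (\<Sum>j\<in>{}. t j * Y j \<omega>) \<partial>M) = 0"
    unfolding P_def by (rule Q) auto
  moreover have "(\<integral>\<omega>. P \<omega> *\<^sub>R iexp (\<Sum>j\<in>{}. t j * Y j \<omega>) \<partial>M) = (\<integral>\<omega>. complex_of_real (P \<omega>) \<partial>M)"
    by (simp add: scaleR_conv_of_real)
  ultimately have "complex_of_real (\<integral>\<omega>. P \<omega> \<partial>M) = 0" by simp
  then have "(\<integral>\<omega>. e \<omega> * (\<Prod>i\<in>I. indicator {..x i} (Y i \<omega>)) \<partial>M) = 0" unfolding P_def by simp
  moreover have "(\<integral>\<omega>. e \<omega> * indicator {\<omega>\<in>space M. \<forall>i\<in>I. Y i \<omega> \<le> x i} \<omega> \<partial>M)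
      = (\<integral>\<omega>. e \<omega> * (\<Prod>i\<in>I. indicator {..x i} (Y i \<omega>)) \<partial>M)"
    by (intro Bochner_Integration.integral_cong refl) (subst prod_ind[OF I], simp add: indicator_def)
  ultimately show ?thesis by simp
qed



lemma dynkin_zero:
  fixes e :: "'a \<Rightarrow> real"
  assumes e: "integrable M e" and G: "Int_stable G" "G \<subseteq> sets M" and Om: "space M \<in> G"
    and H: "\<And>A. A \<in> G \<Longrightarrow> (\<integral>\<omega>\<in>A. e \<omega> \<partial>M) = 0"
    and A: "A \<in> sigma_sets (space M) G"
  shows "(\<integral>\<omega>\<in>A. e \<omega> \<partial>M) = 0"
proof -
  have Gp: "G \<subseteq> Pow (space M)" using G(2) sets.sets_into_space by auto
  have sub: "sigma_sets (space M) G \<subseteq> sets M"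
    using G(2) by (rule sets.sigma_sets_subset)
  show ?thesis
  using G(1) Gp A
  proof (induction rule: sigma_sets_induct_disjoint)
    case (basic A) then show ?case by (rule H)
  next
    case empty then show ?case by (simp add: set_lebesgue_integral_def)
  next
    case (compl A)
    have Am: "A \<in> sets M" using compl(1) sub by auto
    have i1: "integrable M (\<lambda>\<omega>. indicator A \<omega> *\<^sub>R e \<omega>)"
      using integrable_mult_indicator[OF Am e] by simp
    have "(\<integral>\<omega>\<in>space M - A. e \<omega> \<partial>M) = (\<integral>\<omega>. e \<omega> - indicator A \<omega> *\<^sub>R e \<omega> \<partial>M)"
      unfolding set_lebesgue_integral_def
      by (intro Bochner_Integration.integral_cong refl) (auto simp: indicator_def)
    also have "\<dots> = (\<integral>\<omega>. e \<omega> \<partial>M) - (\<integral>\<omega>\<in>A. e \<omega> \<partial>M)"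
      unfolding set_lebesgue_integral_def using e i1 by simp
    also have "(\<integral>\<omega>. e \<omega> \<partial>M) = (\<integral>\<omega>\<in>space M. e \<omega> \<partial>M)"
      unfolding set_lebesgue_integral_def
      by (intro Bochner_Integration.integral_cong refl) (auto simp: indicator_def)
    also have "\<dots> = 0" by (rule H[OF Om])
    finally show ?case using compl(2) by simp
  next
    case (union A)
    have Am: "\<And>i. A i \<in> sets M" using union(2) sub by auto
    have Um: "(\<Union>i. A i) \<in> sets M" using Am by auto
    have "(\<integral>\<omega>\<in>(\<Union>i. A i). e \<omega> \<partial>M) = (\<Sum>i. (\<integral>\<omega>\<in>A i. e \<omega> \<partial>M))"
    proof (rule lebesgue_integral_countable_add[OF Am])
      show "\<And>i j. i \<noteq> j \<Longrightarrow> A i \<inter> A j = {}" using union(1) by (auto simp: disjoint_family_on_def)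
      show "set_integrable M (\<Union>i. A i) e"
        unfolding set_integrable_def using integrable_mult_indicator[OF Um e] by simp
    qed
    also have "\<dots> = 0" using union(3) by simp
    finally show ?case .
  qed
qed



definition sqi :: "'b measure \<Rightarrow> ('b \<Rightarrow> real) \<Rightarrow> bool" where
  "sqi N f \<longleftrightarrow> f \<in> borel_measurable N \<and> integrable N (\<lambda>t. (f t)^2)"

definition ipr :: "'b measure \<Rightarrow> ('b \<Rightarrow> real) \<Rightarrow> ('b \<Rightarrow> real) \<Rightarrow> real" where
  "ipr N f g = (\<integral>t. f t * g t \<partial>N)"

lemma abs_mult_le_sq: "\<bar>a * b\<bar> \<le> a^2 + (b::real)^2"
proof -
  have "0 \<le> (\<bar>a\<bar> - \<bar>b\<bar>)^2" by simp
  then have "2 * (\<bar>a\<bar> * \<bar>b\<bar>) \<le> a^2 + b^2" by (simp add: power2_eq_square algebra_simps)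
  moreover have "0 \<le> a^2 + b^2" by simp
  moreover have "0 \<le> \<bar>a\<bar> * \<bar>b\<bar>" by simp
  ultimately show ?thesis unfolding abs_mult by linarith
qed

lemma sqi_meas: "sqi N f \<Longrightarrow> f \<in> borel_measurable N"
  by (simp add: sqi_def)

lemma sqi_int: "sqi N f \<Longrightarrow> integrable N (\<lambda>t. (f t)^2)"
  by (simp add: sqi_def)

lemma sqi_prod_int:
  assumes "sqi N f" "sqi N g"
  shows "integrable N (\<lambda>t. f t * g t)"
proof (rule Bochner_Integration.integrable_bound[of N "\<lambda>t. (f t)^2 + (g t)^2"])
  show "integrable N (\<lambda>t. (f t)^2 + (g t)^2)" using assms by (simp add: sqi_def)
  show "(\<lambda>t. f t * g t) \<in> borel_measurable N" using assms by (auto simp: sqi_def intro: borel_measurable_times)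
  show "AE x in N. norm (f x * g x) \<le> norm ((f x)^2 + (g x)^2)"
    using abs_mult_le_sq by (intro AE_I2) (simp add: abs_le_iff order_trans[OF _ abs_ge_self])
qed

lemma sqi_add:
  assumes "sqi N f" "sqi N g"
  shows "sqi N (\<lambda>t. f t + g t)"
  unfolding sqi_def
proof
  show "(\<lambda>t. f t + g t) \<in> borel_measurable N" using assms by (auto simp: sqi_def intro: borel_measurable_add)
  have "integrable N (\<lambda>t. (f t)^2 + 2 * (f t * g t) + (g t)^2)"
    using assms sqi_prod_int[OF assms] by (simp add: sqi_def)
  moreover have "(\<lambda>t. (f t + g t)^2) = (\<lambda>t. (f t)^2 + 2 * (f t * g t) + (g t)^2)"
    by (rule ext) (simp add: power2_sum algebra_simps)
  ultimately show "integrable N (\<lambda>t. (f t + g t)^2)" by simp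
qed

lemma sqi_cmult:
  assumes "sqi N f"
  shows "sqi N (\<lambda>t. c * f t)"
  using assms by (auto simp: sqi_def power_mult_distrib intro: borel_measurable_times)

lemma sqi_neg:
  assumes "sqi N f"
  shows "sqi N (\<lambda>t. - f t)"
  using sqi_cmult[OF assms, of "-1"] by simp

lemma sqi_diff:
  assumes "sqi N f" "sqi N g"
  shows "sqi N (\<lambda>t. f t - g t)"
  using sqi_add[OF assms(1) sqi_neg[OF assms(2)]] by simp

lemma sqi_sum:
  assumes "\<And>i. i \<in> S \<Longrightarrow> sqi N (F i)"
  shows "sqi N (\<lambda>t. \<Sum>i\<in>S. F i t)"
proof (cases "finite S")
  case True
  then show ?thesis using assms
  proof (induction S rule: finite_induct)
    case empty then show ?case by (simp add: sqi_def)
  next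
    case (insert x S)
    then show ?case by (simp add: sqi_add)
  qed
next
  case False then show ?thesis by (simp add: sqi_def)
qed

lemma sqi_const:
  assumes "finite_measure N"
  shows "sqi N (\<lambda>t. c)"
  using assms by (simp add: sqi_def finite_measure.integrable_const)

lemma sqi_integrable:
  assumes "finite_measure N" "sqi N f"
  shows "integrable N f"
  using sqi_prod_int[OF assms(2) sqi_const[OF assms(1), of 1]] by simp

lemma ipr_sym: "ipr N f g = ipr N g f"
  by (simp add: ipr_def mult.commute)

lemma ipr_add_left:
  assumes "sqi N f" "sqi N g" "sqi N h"
  shows "ipr N (\<lambda>t. f t + g t) h = ipr N f h + ipr N g h"
  using sqi_prod_int[OF assms(1,3)] sqi_prod_int[OF assms(2,3)]
  by (simp add: ipr_def distrib_right)

lemma ipr_diff_left: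
  assumes "sqi N f" "sqi N g" "sqi N h"
  shows "ipr N (\<lambda>t. f t - g t) h = ipr N f h - ipr N g h"
  using sqi_prod_int[OF assms(1,3)] sqi_prod_int[OF assms(2,3)]
  by (simp add: ipr_def left_diff_distrib)

lemma ipr_cmult_left: "ipr N (\<lambda>t. c * f t) g = c * ipr N f g"
  by (simp add: ipr_def mult.assoc)

lemma ipr_sum_left:
  assumes "finite S" "\<And>i. i \<in> S \<Longrightarrow> sqi N (F i)" "sqi N g"
  shows "ipr N (\<lambda>t. \<Sum>i\<in>S. F i t) g = (\<Sum>i\<in>S. ipr N (F i) g)"
  using assms
proof (induction S rule: finite_induct)
  case empty then show ?case by (simp add: ipr_def)
next
  case (insert x S)
  have "ipr N (\<lambda>t. \<Sum>i\<in>insert x S. F i t) g = ipr N (\<lambda>t. F x t + (\<Sum>i\<in>S. F i t)) g"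
    using insert(1,2) by simp
  also have "\<dots> = ipr N (F x) g + ipr N (\<lambda>t. \<Sum>i\<in>S. F i t) g"
    by (rule ipr_add_left) (use insert sqi_sum[of S N F] in auto)
  finally show ?case using insert by simp
qed

lemma ipr_nonneg: "0 \<le> ipr N f f"
  unfolding ipr_def by (intro integral_nonneg_AE) auto

lemma ipr_mono_sq:
  assumes "sqi N f" "sqi N g" "\<And>t. (f t)^2 \<le> (g t)^2"
  shows "ipr N f f \<le> ipr N g g"
  unfolding ipr_def using assms
  by (intro integral_mono) (auto simp: sqi_def power2_eq_square)

lemma discr_aux:
  fixes A B C :: real
  assumes Q: "\<And>l. 0 \<le> A - 2 * l * B + l^2 * C" and C0: "0 \<le> C"
  shows "B^2 \<le> A * C"
proof (cases "C = 0")
  case True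
  show ?thesis
  proof (cases "B = 0")
    case True then show ?thesis using Q[of 0] \<open>C = 0\<close> by simp
  next
    case False
    have "0 \<le> A - 2 * ((A + 1) / (2 * B)) * B" using Q[of "(A + 1) / (2 * B)"] \<open>C = 0\<close> by simp
    also have "\<dots> = -1" using False by (simp add: field_simps)
    finally show ?thesis by simp
  qed
next
  case False
  from C0 False have Cp: "0 < C" by simp
  have "0 \<le> A - 2 * (B / C) * B + (B / C)^2 * C" by (rule Q)
  also have "\<dots> = A - B^2 / C" using Cp by (simp add: field_simps power2_eq_square)
  finally have "B^2 / C \<le> A" by simp
  then show ?thesis using Cp by (simp add: divide_le_eq mult.commute)
qed

lemma ipr_CS:
  assumes f: "sqi N f" and g: "sqi N g"
  shows "(ipr N f g)^2 \<le> ipr N f f * ipr N g g"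
proof (rule discr_aux)
  show "0 \<le> ipr N g g" by (rule ipr_nonneg)
  fix l :: real
  have i1: "integrable N (\<lambda>t. f t * f t)" by (rule sqi_prod_int[OF f f])
  have i2: "integrable N (\<lambda>t. 2 * l * (f t * g t))" using sqi_prod_int[OF f g] by simp
  have i3: "integrable N (\<lambda>t. l^2 * (g t * g t))" using sqi_prod_int[OF g g] by simp
  have "0 \<le> (\<integral>t. (f t - l * g t)^2 \<partial>N)" by (intro integral_nonneg_AE) auto
  also have "\<dots> = (\<integral>t. f t * f t - 2 * l * (f t * g t) + l^2 * (g t * g t) \<partial>N)"
    by (intro Bochner_Integration.integral_cong refl) (simp add: power2_eq_square algebra_simps)
  also have "\<dots> = ipr N f f - 2 * l * ipr N f g + l^2 * ipr N g g"
    using i1 i2 i3 by (simp add: ipr_def)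
  finally show "0 \<le> ipr N f f - 2 * l * ipr N f g + l^2 * ipr N g g" .
qed

lemma ipr_CS_abs:
  assumes f: "sqi N f" and g: "sqi N g"
  shows "\<bar>ipr N f g\<bar> \<le> sqrt (ipr N f f) * sqrt (ipr N g g)"
proof -
  have "\<bar>ipr N f g\<bar> = sqrt ((ipr N f g)^2)" by simp
  also have "\<dots> \<le> sqrt (ipr N f f * ipr N g g)" by (rule real_sqrt_le_mono[OF ipr_CS[OF f g]])
  also have "\<dots> = sqrt (ipr N f f) * sqrt (ipr N g g)" by (simp add: real_sqrt_mult)
  finally show ?thesis .
qed

lemma fatou_sq:
  fixes h :: "nat \<Rightarrow> 'b \<Rightarrow> real"
  assumes hm[measurable]: "\<And>j. h j \<in> borel_measurable N" and Hm[measurable]: "H \<in> borel_measurable N"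
    and conv: "AE t in N. (\<lambda>j. h j t) \<longlonglongrightarrow> H t"
    and hi: "\<And>j. integrable N (\<lambda>t. (h j t)^2)"
    and bd: "\<And>j. (\<integral>t. (h j t)^2 \<partial>N) \<le> B"
  shows "integrable N (\<lambda>t. (H t)^2)" "(\<integral>t. (H t)^2 \<partial>N) \<le> B"
proof -
  have "0 \<le> (\<integral>t. (h 0 t)^2 \<partial>N)" by (intro integral_nonneg_AE) simp
  then have B0: "0 \<le> B" using bd[of 0] by linarith
  have "(\<integral>\<^sup>+t. ennreal ((H t)^2) \<partial>N) = (\<integral>\<^sup>+t. liminf (\<lambda>j. ennreal ((h j t)^2)) \<partial>N)"
  proof (rule nn_integral_cong_AE)
    show "AE t in N. ennreal ((H t)^2) = liminf (\<lambda>j. ennreal ((h j t)^2))"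
      using conv
    proof (rule AE_mp, intro AE_I2 impI)
      fix t assume "(\<lambda>j. h j t) \<longlonglongrightarrow> H t"
      then have "(\<lambda>j. ennreal ((h j t)^2)) \<longlonglongrightarrow> ennreal ((H t)^2)"
        by (intro tendsto_ennrealI tendsto_power)
      then show "ennreal ((H t)^2) = liminf (\<lambda>j. ennreal ((h j t)^2))"
        by (rule lim_imp_Liminf[symmetric, OF trivial_limit_sequentially])
    qed
  qed
  also have "\<dots> \<le> liminf (\<lambda>j. \<integral>\<^sup>+t. ennreal ((h j t)^2) \<partial>N)"
    by (rule nn_integral_liminf) simp
  also have "\<dots> \<le> liminf (\<lambda>j. ennreal B)"
  proof (intro Liminf_mono always_eventually allI)
    fix j
    have "(\<integral>\<^sup>+t. ennreal ((h j t)^2) \<partial>N) = ennreal (\<integral>t. (h j t)^2 \<partial>N)"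
      by (rule nn_integral_eq_integral[OF hi]) simp
    also have "\<dots> \<le> ennreal B" using bd[of j] by (rule ennreal_leI)
    finally show "(\<integral>\<^sup>+t. ennreal ((h j t)^2) \<partial>N) \<le> ennreal B" .
  qed
  also have "\<dots> = ennreal B" by (simp add: Liminf_const)
  finally have fin: "(\<integral>\<^sup>+t. ennreal ((H t)^2) \<partial>N) \<le> ennreal B" .
  show HI: "integrable N (\<lambda>t. (H t)^2)"
  proof (rule integrableI_bounded)
    show "(\<lambda>t. (H t)^2) \<in> borel_measurable N" by simp
    have "(\<integral>\<^sup>+t. ennreal (norm ((H t)^2)) \<partial>N) = (\<integral>\<^sup>+t. ennreal ((H t)^2) \<partial>N)" by simp
    also have "\<dots> < \<infinity>" using fin by (simp add: le_less_trans)
    finally show "(\<integral>\<^sup>+t. ennreal (norm ((H t)^2)) \<partial>N) < \<infinity>" .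
  qed
  have "ennreal (\<integral>t. (H t)^2 \<partial>N) = (\<integral>\<^sup>+t. ennreal ((H t)^2) \<partial>N)"
    by (rule nn_integral_eq_integral[OF HI, symmetric]) simp
  with fin have "ennreal (\<integral>t. (H t)^2 \<partial>N) \<le> ennreal B" by simp
  then show "(\<integral>t. (H t)^2 \<partial>N) \<le> B" using B0 by (simp add: ennreal_le_iff)
qed



lemma ipr_comb:
  assumes "finite S" "\<And>i. sqi N (\<psi> i)" "sqi N h"
  shows "ipr N (\<lambda>t. \<Sum>i\<in>S. a i * \<psi> i t) h = (\<Sum>i\<in>S. a i * ipr N (\<psi> i) h)"
proof -
  have "ipr N (\<lambda>t. \<Sum>i\<in>S. a i * \<psi> i t) h = (\<Sum>i\<in>S. ipr N (\<lambda>t. a i * \<psi> i t) h)"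
    by (rule ipr_sum_left) (use assms sqi_cmult in auto)
  then show ?thesis by (simp add: ipr_cmult_left)
qed

lemma ipr_comb_psi:
  assumes "finite S" "\<And>i. sqi N (\<psi> i)"
    and orth: "\<And>i j. ipr N (\<psi> i) (\<psi> j) = (if i = j then 1 else 0)"
  shows "ipr N (\<lambda>t. \<Sum>i\<in>S. a i * \<psi> i t) (\<psi> j) = (if j \<in> S then a j else 0)"
  using assms by (simp add: ipr_comb orth if_distrib[of "\<lambda>x. _ * x"] sum.delta' cong: if_cong)

lemma ipr_comb_comb:
  assumes "finite S" "\<And>i. sqi N (\<psi> i)"
    and orth: "\<And>i j. ipr N (\<psi> i) (\<psi> j) = (if i = j then 1 else 0)"
  shows "ipr N (\<lambda>t. \<Sum>i\<in>S. a i * \<psi> i t) (\<lambda>t. \<Sum>i\<in>S. b i * \<psi> i t) = (\<Sum>i\<in>S. a i * b i)"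
proof -
  have sb: "sqi N (\<lambda>t. \<Sum>i\<in>S. b i * \<psi> i t)" using assms by (intro sqi_sum sqi_cmult) auto
  have "ipr N (\<lambda>t. \<Sum>i\<in>S. a i * \<psi> i t) (\<lambda>t. \<Sum>i\<in>S. b i * \<psi> i t)
      = (\<Sum>i\<in>S. a i * ipr N (\<psi> i) (\<lambda>t. \<Sum>i\<in>S. b i * \<psi> i t))"
    by (rule ipr_comb[OF assms(1,2) sb])
  also have "\<dots> = (\<Sum>i\<in>S. a i * b i)"
    by (intro sum.cong refl) (simp add: ipr_sym[of N "\<psi> _"] ipr_comb_psi[OF assms])
  finally show ?thesis .
qed

lemma parseval:
  fixes N :: "'b measure" and \<psi> :: "nat \<Rightarrow> 'b \<Rightarrow> real"
  assumes P: "prob_space N"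
    and psq: "\<And>i. sqi N (\<psi> i)"
    and orth: "\<And>i j. ipr N (\<psi> i) (\<psi> j) = (if i = j then 1 else 0)"
    and compl: "\<And>h. sqi N h \<Longrightarrow> (\<And>i. ipr N h (\<psi> i) = 0) \<Longrightarrow> AE t in N. h t = 0"
    and f: "sqi N f" and g: "sqi N g"
  shows "(\<lambda>p. \<Sum>i<p. ipr N g (\<psi> i) * ipr N f (\<psi> i)) \<longlonglongrightarrow> ipr N f g"
proof -
  have fm: "finite_measure N" using P by (simp add: prob_space_def)
  define c where "c i = ipr N g (\<psi> i)" for i
  define gp where "gp p = (\<lambda>t. \<Sum>i<p. c i * \<psi> i t)" for p
  define r where "r p = (\<lambda>t. g t - gp p t)" for p
  define S where "S p = (\<Sum>i<p. (c i)^2)" for p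
  have sgp: "sqi N (gp p)" for p unfolding gp_def using psq by (intro sqi_sum sqi_cmult) auto
  have sr: "sqi N (r p)" for p unfolding r_def using g sgp by (rule sqi_diff)
  have gp_h: "ipr N (gp p) h = (\<Sum>i<p. c i * ipr N (\<psi> i) h)" if "sqi N h" for p h
    unfolding gp_def by (rule ipr_comb[OF _ psq that]) simp
  have gp_g: "ipr N (gp p) g = S p" for p
    using gp_h[OF g, of p] by (simp add: S_def c_def power2_eq_square ipr_sym[of N "\<psi> _" g])
  have gp_gp: "ipr N (gp p) (gp p) = S p" for p
    unfolding gp_def S_def by (subst ipr_comb_comb[OF _ psq orth]) (simp_all add: power2_eq_square)
  have r_h: "ipr N (r p) h = ipr N g h - ipr N (gp p) h" if "sqi N h" for p h
    unfolding r_def by (rule ipr_diff_left[OF g sgp that])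
  have rr: "ipr N (r p) (r p) = ipr N g g - S p" for p
  proof -
    have "ipr N (r p) (r p) = ipr N g (r p) - ipr N (gp p) (r p)" by (rule r_h[OF sr])
    also have "\<dots> = ipr N (r p) g - ipr N (r p) (gp p)" by (simp add: ipr_sym)
    also have "\<dots> = (ipr N g g - S p) - (ipr N g (gp p) - S p)"
      using r_h[OF g, of p] r_h[OF sgp, of p] gp_g gp_gp by simp
    also have "\<dots> = ipr N g g - S p" using gp_g[of p] by (simp add: ipr_sym)
    finally show ?thesis .
  qed
  have Sle: "S p \<le> ipr N g g" for p using rr[of p] ipr_nonneg[of N "r p"] by simp
  have summ: "summable (\<lambda>i. (c i)^2)"
    by (rule summableI_nonneg_bounded[where x="ipr N g g"]) (use Sle in \<open>auto simp: S_def\<close>)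
  define L where "L = (\<Sum>i. (c i)^2)"
  have SL: "S \<longlonglongrightarrow> L" unfolding S_def L_def using summable_LIMSEQ[OF summ] .
  have S_le_L: "S p \<le> L" for p unfolding S_def L_def by (rule sum_le_suminf[OF summ]) auto
  have L_le: "L \<le> ipr N g g" unfolding L_def by (rule suminf_le_const[OF summ]) (use Sle in \<open>auto simp: S_def\<close>)
  have Smono: "S p \<le> S q" if "p \<le> q" for p q unfolding S_def using that by (intro sum_mono2) auto
  have rdiff: "ipr N (\<lambda>t. r p t - r q t) (\<lambda>t. r p t - r q t) = S q - S p" if pq: "p \<le> q" for p q
  proof -
    have un: "{..<q} = {..<p} \<union> {p..<q}" using pq by auto
    have split: "(\<Sum>i<q. a i) = (\<Sum>i<p. a i) + (\<Sum>i\<in>{p..<q}. a i)" for a :: "nat \<Rightarrow> real"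
      unfolding un by (rule sum.union_disjoint) auto
    have "(\<lambda>t. r p t - r q t) = (\<lambda>t. \<Sum>i\<in>{p..<q}. c i * \<psi> i t)"
      by (rule ext) (simp add: r_def gp_def split)
    then have "ipr N (\<lambda>t. r p t - r q t) (\<lambda>t. r p t - r q t) = (\<Sum>i\<in>{p..<q}. c i * c i)"
      by (simp add: ipr_comb_comb[OF _ psq orth])
    also have "\<dots> = S q - S p" by (simp add: S_def split power2_eq_square)
    finally show ?thesis .
  qed
  define T where "T p = L - S p" for p
  have T0: "T \<longlonglongrightarrow> 0" unfolding T_def using tendsto_diff[OF tendsto_const SL, of L] by simp
  have dT: "ipr N (\<lambda>t. r p t - r q t) (\<lambda>t. r p t - r q t) \<le> T n" if "n \<le> p" "n \<le> q" for n p q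
  proof (cases "p \<le> q")
    case True
    then show ?thesis using rdiff[OF True] Smono[OF that(1)] S_le_L[of q] by (simp add: T_def)
  next
    case False
    then have qp: "q \<le> p" by simp
    have "ipr N (\<lambda>t. r p t - r q t) (\<lambda>t. r p t - r q t) = ipr N (\<lambda>t. r q t - r p t) (\<lambda>t. r q t - r p t)"
      unfolding ipr_def by (simp add: algebra_simps)
    then show ?thesis using rdiff[OF qp] Smono[OF that(2)] S_le_L[of p] by (simp add: T_def)
  qed
  have one: "ipr N (\<lambda>t. 1) (\<lambda>t. 1) = 1"
    using P by (simp add: ipr_def prob_space.prob_space)
  have L1: "(\<integral>t. norm (r p t - r q t) \<partial>N) \<le> sqrt (T n)" if "n \<le> p" "n \<le> q" for n p q
  proof -
    let ?d = "\<lambda>t. r p t - r q t"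
    have sd: "sqi N ?d" by (rule sqi_diff[OF sr sr])
    have sad: "sqi N (\<lambda>t. \<bar>?d t\<bar>)" using sd by (auto simp: sqi_def intro: borel_measurable_abs)
    have "(\<integral>t. norm (?d t) \<partial>N) = ipr N (\<lambda>t. \<bar>?d t\<bar>) (\<lambda>t. 1)" by (simp add: ipr_def)
    also have "\<dots> \<le> sqrt (ipr N (\<lambda>t. \<bar>?d t\<bar>) (\<lambda>t. \<bar>?d t\<bar>)) * sqrt (ipr N (\<lambda>t. 1) (\<lambda>t. 1))"
      by (rule order_trans[OF abs_ge_self ipr_CS_abs[OF sad sqi_const[OF fm]]])
    also have "ipr N (\<lambda>t. \<bar>?d t\<bar>) (\<lambda>t. \<bar>?d t\<bar>) = ipr N ?d ?d" by (simp add: ipr_def)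
    also have "sqrt (ipr N ?d ?d) * sqrt (ipr N (\<lambda>t. 1) (\<lambda>t. 1)) \<le> sqrt (T n)"
      using one dT[OF that] by simp
    finally show ?thesis .
  qed
  have cauchyL1: "\<exists>n. \<forall>i\<ge>n. \<forall>j\<ge>n. (\<integral>t. norm (r i t - r j t) \<partial>N) < e" if e: "e > 0" for e :: real
  proof -
    have "eventually (\<lambda>n. T n < e^2) sequentially" using e by (intro order_tendstoD(2)[OF T0]) simp
    then obtain n where n: "T n < e^2" by (auto simp: eventually_sequentially)
    then have "sqrt (T n) < sqrt (e^2)" by (rule real_sqrt_less_mono)
    then have "sqrt (T n) < e" using e by simp
    then show ?thesis using L1[of n] by (intro exI[of _ n]) (auto intro: le_less_trans)
  qed
  have ri: "integrable N (r p)" for p by (rule sqi_integrable[OF fm sr])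
  obtain \<sigma> where \<sigma>: "strict_mono \<sigma>" "AE t in N. Cauchy (\<lambda>k. r (\<sigma> k) t)"
    using cauchy_L1_AE_cauchy_subseq[where s=r and M=N, OF ri cauchyL1] by blast
  define R where "R t = lim (\<lambda>k. r (\<sigma> k) t)" for t
  have rm: "r p \<in> borel_measurable N" for p using sr[of p] by (simp add: sqi_def)
  have Rm: "R \<in> borel_measurable N" unfolding R_def using rm by (intro borel_measurable_lim_metric)
  have Rconv: "AE t in N. (\<lambda>k. r (\<sigma> k) t) \<longlonglongrightarrow> R t"
    using \<sigma>(2) by eventually_elim (simp add: R_def Cauchy_convergent_iff convergent_LIMSEQ_iff)
  have fat: "sqi N (\<lambda>t. R t - r (\<sigma> k) t) \<and> ipr N (\<lambda>t. R t - r (\<sigma> k) t) (\<lambda>t. R t - r (\<sigma> k) t) \<le> T (\<sigma> k)" for k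
  proof -
    let ?h = "\<lambda>j t. r (\<sigma> (j + k)) t - r (\<sigma> k) t"
    have sh: "sqi N (?h j)" for j by (rule sqi_diff[OF sr sr])
    have hm: "?h j \<in> borel_measurable N" for j using sh[of j] by (simp add: sqi_def)
    have Hm: "(\<lambda>t. R t - r (\<sigma> k) t) \<in> borel_measurable N" using Rm rm by (intro borel_measurable_diff)
    have conv: "AE t in N. (\<lambda>j. ?h j t) \<longlonglongrightarrow> R t - r (\<sigma> k) t"
      using Rconv by eventually_elim (intro tendsto_diff tendsto_const LIMSEQ_ignore_initial_segment)
    have hi: "integrable N (\<lambda>t. (?h j t)^2)" for j using sh[of j] by (simp add: sqi_def)
    have bd: "(\<integral>t. (?h j t)^2 \<partial>N) \<le> T (\<sigma> k)" for j
    proof -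
      have "\<sigma> k \<le> \<sigma> (j + k)" using \<sigma>(1) by (simp add: strict_mono_less_eq)
      then have "ipr N (?h j) (?h j) \<le> T (\<sigma> k)" by (intro dT) auto
      then show ?thesis by (simp add: ipr_def power2_eq_square)
    qed
    note F = fatou_sq[OF hm Hm conv hi bd]
    show ?thesis using F Hm by (simp add: sqi_def ipr_def power2_eq_square)
  qed
  have sR: "sqi N R" using sqi_add[OF fat[of 0, THEN conjunct1] sr[of "\<sigma> 0"]] by simp
  have Rpsi: "ipr N R (\<psi> i) = 0" for i
  proof -
    have rpsi: "ipr N (r p) (\<psi> i) = 0" if "i < p" for p
      using that by (simp add: r_h[OF psq] gp_def ipr_comb_psi[OF _ psq orth] c_def)
    have bound: "(ipr N R (\<psi> i))^2 \<le> T (\<sigma> k)" if "i < k" for k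
    proof -
      have "k \<le> \<sigma> k" by (rule seq_suble[OF \<sigma>(1)])
      with that have "i < \<sigma> k" by simp
      have "ipr N (\<lambda>t. R t - r (\<sigma> k) t) (\<psi> i) = ipr N R (\<psi> i) - ipr N (r (\<sigma> k)) (\<psi> i)"
        by (rule ipr_diff_left[OF sR sr psq])
      also have "\<dots> = ipr N R (\<psi> i)" using rpsi[OF \<open>i < \<sigma> k\<close>] by simp
      finally have eq: "ipr N (\<lambda>t. R t - r (\<sigma> k) t) (\<psi> i) = ipr N R (\<psi> i)" .
      have "(ipr N (\<lambda>t. R t - r (\<sigma> k) t) (\<psi> i))^2
          \<le> ipr N (\<lambda>t. R t - r (\<sigma> k) t) (\<lambda>t. R t - r (\<sigma> k) t) * ipr N (\<psi> i) (\<psi> i)"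
        by (rule ipr_CS[OF fat[THEN conjunct1] psq])
      also have "\<dots> \<le> T (\<sigma> k)" using fat[of k] orth[of i i] by simp
      finally show ?thesis using eq by simp
    qed
    have "(\<lambda>k. T (\<sigma> k)) \<longlonglongrightarrow> 0" using LIMSEQ_subseq_LIMSEQ[OF T0 \<sigma>(1)] by (simp add: o_def)
    then have "(ipr N R (\<psi> i))^2 \<le> 0"
      by (rule LIMSEQ_le_const) (use bound in \<open>auto intro!: exI[of _ "Suc i"]\<close>)
    then show ?thesis by simp
  qed
  have R0: "AE t in N. R t = 0" by (rule compl[OF sR Rpsi])
  have "ipr N (r (\<sigma> 0)) (r (\<sigma> 0)) = ipr N (\<lambda>t. R t - r (\<sigma> 0) t) (\<lambda>t. R t - r (\<sigma> 0) t)"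
    unfolding ipr_def using R0 rm Rm by (intro integral_cong_AE) auto
  then have "ipr N g g - S (\<sigma> 0) \<le> T (\<sigma> 0)" using fat[of 0] rr[of "\<sigma> 0"] by simp
  then have "ipr N g g \<le> L" by (simp add: T_def)
  with L_le have Lg: "L = ipr N g g" by simp
  have "(\<lambda>p. ipr N (r p) (r p)) = T" by (rule ext) (simp add: rr T_def Lg)
  then have rr0: "(\<lambda>p. ipr N (r p) (r p)) \<longlonglongrightarrow> 0" using T0 by simp
  have key: "ipr N f (r p) = ipr N f g - (\<Sum>i<p. ipr N g (\<psi> i) * ipr N f (\<psi> i))" for p
  proof -
    have "ipr N f (r p) = ipr N (r p) f" by (rule ipr_sym)
    also have "\<dots> = ipr N g f - ipr N (gp p) f" by (rule r_h[OF f])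
    also have "\<dots> = ipr N f g - (\<Sum>i<p. c i * ipr N (\<psi> i) f)" by (simp add: gp_h[OF f] ipr_sym[of N g f])
    also have "(\<Sum>i<p. c i * ipr N (\<psi> i) f) = (\<Sum>i<p. ipr N g (\<psi> i) * ipr N f (\<psi> i))"
      by (intro sum.cong refl) (simp add: c_def ipr_sym[of N "\<psi> _" f])
    finally show ?thesis .
  qed
  have "(\<lambda>p. ipr N f (r p)) \<longlonglongrightarrow> 0"
  proof (rule Lim_null_comparison)
    show "eventually (\<lambda>p. norm (ipr N f (r p)) \<le> sqrt (ipr N f f) * sqrt (ipr N (r p) (r p))) sequentially"
      by (intro always_eventually allI) (simp add: ipr_CS_abs[OF f sr])
    show "(\<lambda>p. sqrt (ipr N f f) * sqrt (ipr N (r p) (r p))) \<longlonglongrightarrow> 0"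
      using tendsto_mult[OF tendsto_const tendsto_real_sqrt[OF rr0], of "sqrt (ipr N f f)"] by simp
  qed
  then have "(\<lambda>p. ipr N f g - ipr N f (r p)) \<longlonglongrightarrow> ipr N f g - 0" by (intro tendsto_diff tendsto_const)
  then show ?thesis by (simp add: key)
qed



abbreviation "N01 \<equiv> restrict_space lborel {0..1::real}"

lemma N01_sets: "{0..1::real} \<inter> space lborel \<in> sets lborel" by simp

lemma L2_01_iff: "L2_01 f \<longleftrightarrow> sqi N01 f"
  unfolding L2_01_def sqi_def set_borel_measurable_def set_integrable_def
  by (simp add: borel_measurable_restrict_space_iff integrable_restrict_space)

lemma L2_inner_eq: "L2_inner f g = ipr N01 f g"
  unfolding L2_inner_def ipr_def set_lebesgue_integral_def
  by (simp add: integral_restrict_space)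

lemma N01_prob: "prob_space N01"
proof (rule prob_spaceI)
  have "emeasure N01 (space N01) = emeasure lborel {0..1::real}"
    by (subst emeasure_restrict_space) auto
  then show "emeasure N01 (space N01) = 1" by simp
qed

lemma N01_AE: "(AE t in lborel. t \<in> {0..1::real} \<longrightarrow> P t) \<longleftrightarrow> (AE t in N01. P t)"
  by (simp add: AE_restrict_space_iff)

lemma onb_props:
  assumes "orthonormal_basis_L2 \<psi>"
  shows "\<And>i. sqi N01 (\<psi> i)"
    and "\<And>i j. ipr N01 (\<psi> i) (\<psi> j) = (if i = j then 1 else 0)"
    and "\<And>h. sqi N01 h \<Longrightarrow> (\<And>i. ipr N01 h (\<psi> i) = 0) \<Longrightarrow> AE t in N01. h t = 0"
  using assms unfolding orthonormal_basis_L2_def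
  by (auto simp: L2_01_iff L2_inner_eq N01_AE[symmetric])

lemma parseval_L2:
  assumes "orthonormal_basis_L2 \<psi>" "L2_01 f" "L2_01 g"
  shows "(\<lambda>p. \<Sum>i<p. L2_inner g (\<psi> i) * L2_inner f (\<psi> i)) \<longlonglongrightarrow> L2_inner f g"
  using parseval[OF N01_prob onb_props[OF assms(1)]] assms(2,3)
  by (simp add: L2_01_iff L2_inner_eq)

lemma ce_zero_iff:
  assumes P: "prob_space M" and sub: "subalgebra M F" and e: "integrable M e"
  shows "(AE \<omega> in M. real_cond_exp M F e \<omega> = 0) \<longleftrightarrow> (\<forall>A\<in>sets F. (\<integral>\<omega>\<in>A. e \<omega> \<partial>M) = 0)"
proof -
  have "sigma_finite_subalgebra M F"
    by (rule finite_measure_subalgebra_is_sigma_finite)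
      (use P sub in \<open>auto simp: finite_measure_subalgebra_def finite_measure_subalgebra_axioms_def prob_space_def\<close>)
  then interpret sigma_finite_subalgebra M F .
  show ?thesis
  proof
    assume AE: "AE \<omega> in M. real_cond_exp M F e \<omega> = 0"
    show "\<forall>A\<in>sets F. (\<integral>\<omega>\<in>A. e \<omega> \<partial>M) = 0"
    proof
      fix A assume A: "A \<in> sets F"
      have AM: "A \<in> sets M" using A sub by (auto simp: subalgebra_def)
      have "(\<integral>\<omega>\<in>A. e \<omega> \<partial>M) = (\<integral>\<omega>\<in>A. real_cond_exp M F e \<omega> \<partial>M)" by (rule real_cond_exp_intA[OF e A])
      also have "\<dots> = (\<integral>\<omega>. indicator A \<omega> *\<^sub>R (0::real) \<partial>M)"
        unfolding set_lebesgue_integral_def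
        by (rule integral_cong_AE) (use AE AM in auto)
      also have "\<dots> = 0" by simp
      finally show "(\<integral>\<omega>\<in>A. e \<omega> \<partial>M) = 0" .
    qed
  next
    assume H: "\<forall>A\<in>sets F. (\<integral>\<omega>\<in>A. e \<omega> \<partial>M) = 0"
    have "AE \<omega> in M. real_cond_exp M F e \<omega> = (\<lambda>_. 0) \<omega>"
      by (rule real_cond_exp_charact) (use H e in \<open>auto simp: set_lebesgue_integral_def\<close>)
    then show "AE \<omega> in M. real_cond_exp M F e \<omega> = 0" by simp
  qed
qed



lemma comb_L2:
  assumes "orthonormal_basis_L2 \<psi>"
  shows "L2_01 (\<lambda>t. \<Sum>i<p. \<gamma> i * \<psi> i t)"
  unfolding L2_01_iff using onb_props(1)[OF assms] by (intro sqi_sum sqi_cmult) auto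

lemma proj_inner:
  assumes "orthonormal_basis_L2 \<psi>" "L2_01 f"
  shows "proj p \<gamma> \<psi> f = L2_inner f (\<lambda>t. \<Sum>i<p. \<gamma> i * \<psi> i t)"
proof -
  have f: "sqi N01 f" using assms(2) by (simp add: L2_01_iff)
  have "L2_inner f (\<lambda>t. \<Sum>i<p. \<gamma> i * \<psi> i t) = ipr N01 (\<lambda>t. \<Sum>i<p. \<gamma> i * \<psi> i t) f"
    by (simp add: L2_inner_eq ipr_sym)
  also have "\<dots> = (\<Sum>i<p. \<gamma> i * ipr N01 (\<psi> i) f)"
    by (rule ipr_comb[OF _ onb_props(1)[OF assms(1)] f]) simp
  also have "\<dots> = proj p \<gamma> \<psi> f"
    unfolding proj_def by (intro sum.cong refl) (simp add: L2_inner_eq ipr_sym)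
  finally show ?thesis by simp
qed

theorem proposition1:
  fixes M :: "'a measure" and e :: "'a \<Rightarrow> real" and X :: "'a \<Rightarrow> real \<Rightarrow> real"
    and \<psi> :: "nat \<Rightarrow> real \<Rightarrow> real"
  assumes "prob_space M"
    and "integrable M e"
    and "(\<integral>\<omega>. e \<omega> \<partial>M) = 0"
    and "\<forall>\<omega>\<in>space M. L2_01 (X \<omega>)"
    and "\<forall>g. L2_01 g \<longrightarrow> (\<lambda>\<omega>. L2_inner (X \<omega>) g) \<in> borel_measurable M"
    and "orthonormal_basis_L2 \<psi>"
  shows "((AE \<omega> in M. real_cond_exp M (sigma_L2 M X) e \<omega> = 0)
           \<longleftrightarrow> (\<forall>p\<ge>1. \<forall>\<gamma>. (\<Sum>i<p. (\<gamma> i)^2) = 1 \<longrightarrow>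
                 (AE \<omega> in M. real_cond_exp M
                    (vimage_algebra (space M) (\<lambda>\<omega>. proj p \<gamma> \<psi> (X \<omega>)) borel) e \<omega> = 0)))
       \<and> ((\<forall>p\<ge>1. \<forall>\<gamma>. (\<Sum>i<p. (\<gamma> i)^2) = 1 \<longrightarrow>
                 (AE \<omega> in M. real_cond_exp M
                    (vimage_algebra (space M) (\<lambda>\<omega>. proj p \<gamma> \<psi> (X \<omega>)) borel) e \<omega> = 0))
           \<longleftrightarrow> (\<forall>p\<ge>1. \<forall>\<gamma>. \<forall>x::real. (\<Sum>i<p. (\<gamma> i)^2) = 1 \<longrightarrow>
                 (\<integral>\<omega>. e \<omega> * indicator {\<omega>\<in>space M. proj p \<gamma> \<psi> (X \<omega>) \<le> x} \<omega> \<partial>M) = 0))"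
proof -
  note P = assms(1) and e = assms(2) and e0 = assms(3) and XL2 = assms(4) and Xm = assms(5) and onb = assms(6)
  interpret prob_space M by (rule P)
  have em[measurable]: "e \<in> borel_measurable M" using e by auto
  define Y where "Y i \<omega> = L2_inner (X \<omega>) (\<psi> i)" for i \<omega>
  have psiL2: "L2_01 (\<psi> i)" for i using onb by (simp add: orthonormal_basis_L2_def)
  have Ym[measurable]: "Y i \<in> borel_measurable M" for i unfolding Y_def using Xm psiL2 by auto
  have projY: "proj p \<gamma> \<psi> (X \<omega>) = (\<Sum>i<p. \<gamma> i * Y i \<omega>)" for p \<gamma> \<omega>
    unfolding proj_def Y_def ..
  have Zm[measurable]: "(\<lambda>\<omega>. proj p \<gamma> \<psi> (X \<omega>)) \<in> borel_measurable M" for p \<gamma>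
    unfolding projY by measurable
  define Gen where "Gen = {(\<lambda>\<omega>. L2_inner (X \<omega>) g) -` B \<inter> space M | g B. L2_01 g \<and> B \<in> sets borel}"
  have Gen_sub: "Gen \<subseteq> sets M"
  proof
    fix A assume "A \<in> Gen"
    then obtain g B where A: "A = (\<lambda>\<omega>. L2_inner (X \<omega>) g) -` B \<inter> space M" and g: "L2_01 g" and B: "B \<in> sets borel"
      unfolding Gen_def by blast
    show "A \<in> sets M" unfolding A using measurable_sets[OF Xm[rule_format, OF g] B] .
  qed
  have Gen_pow: "Gen \<subseteq> Pow (space M)" unfolding Gen_def by auto
  have sets_F: "sets (sigma_L2 M X) = sigma_sets (space M) Gen"
    unfolding sigma_L2_def Gen_def[symmetric] using Gen_pow by (rule sets_measure_of)
  have space_F: "space (sigma_L2 M X) = space M"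
    unfolding sigma_L2_def Gen_def[symmetric] using Gen_pow by (rule space_measure_of)
  have subF: "subalgebra M (sigma_L2 M X)"
    unfolding subalgebra_def sets_F space_F using sets.sigma_sets_subset[OF Gen_sub] by simp
  have sets_V: "sets (vimage_algebra (space M) (\<lambda>\<omega>. proj p \<gamma> \<psi> (X \<omega>)) borel)
      = {(\<lambda>\<omega>. proj p \<gamma> \<psi> (X \<omega>)) -` B \<inter> space M | B. B \<in> sets borel}" for p \<gamma>
    by (rule sets_vimage_algebra2) simp
  have subV: "subalgebra M (vimage_algebra (space M) (\<lambda>\<omega>. proj p \<gamma> \<psi> (X \<omega>)) borel)" for p \<gamma>
    unfolding subalgebra_def sets_V by (auto intro: measurable_sets[OF Zm])
  have C1: "(AE \<omega> in M. real_cond_exp M (sigma_L2 M X) e \<omega> = 0) \<longleftrightarrow> (\<forall>A\<in>sets (sigma_L2 M X). (\<integral>\<omega>\<in>A. e \<omega> \<partial>M) = 0)"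
    by (rule ce_zero_iff[OF P subF e])
  have C2: "(AE \<omega> in M. real_cond_exp M (vimage_algebra (space M) (\<lambda>\<omega>. proj p \<gamma> \<psi> (X \<omega>)) borel) e \<omega> = 0)
      \<longleftrightarrow> (\<forall>A\<in>sets (vimage_algebra (space M) (\<lambda>\<omega>. proj p \<gamma> \<psi> (X \<omega>)) borel). (\<integral>\<omega>\<in>A. e \<omega> \<partial>M) = 0)" for p \<gamma>
    by (rule ce_zero_iff[OF P subV e])
  have setint: "(\<integral>\<omega>. e \<omega> * indicator A \<omega> \<partial>M) = (\<integral>\<omega>\<in>A. e \<omega> \<partial>M)" for A
    unfolding set_lebesgue_integral_def by (simp add: mult.commute)
  have i_ii: "\<forall>A\<in>sets (vimage_algebra (space M) (\<lambda>\<omega>. proj p \<gamma> \<psi> (X \<omega>)) borel). (\<integral>\<omega>\<in>A. e \<omega> \<partial>M) = 0"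
    if H1: "\<forall>A\<in>sets (sigma_L2 M X). (\<integral>\<omega>\<in>A. e \<omega> \<partial>M) = 0" for p \<gamma>
  proof
    fix A assume "A \<in> sets (vimage_algebra (space M) (\<lambda>\<omega>. proj p \<gamma> \<psi> (X \<omega>)) borel)"
    then obtain B where A: "A = (\<lambda>\<omega>. proj p \<gamma> \<psi> (X \<omega>)) -` B \<inter> space M" and B: "B \<in> sets borel"
      unfolding sets_V by blast
    let ?g = "\<lambda>t. \<Sum>i<p. \<gamma> i * \<psi> i t"
    have "A = (\<lambda>\<omega>. L2_inner (X \<omega>) ?g) -` B \<inter> space M"
      unfolding A using proj_inner[OF onb] XL2 by auto
    then have "A \<in> Gen" unfolding Gen_def using comb_L2[OF onb] B by blast
    then have "A \<in> sets (sigma_L2 M X)" unfolding sets_F by auto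
    then show "(\<integral>\<omega>\<in>A. e \<omega> \<partial>M) = 0" using H1 by blast
  qed
  have ii_iii: "(\<integral>\<omega>. e \<omega> * indicator {\<omega>\<in>space M. proj p \<gamma> \<psi> (X \<omega>) \<le> x} \<omega> \<partial>M) = 0"
    if H2: "\<forall>A\<in>sets (vimage_algebra (space M) (\<lambda>\<omega>. proj p \<gamma> \<psi> (X \<omega>)) borel). (\<integral>\<omega>\<in>A. e \<omega> \<partial>M) = 0" for p \<gamma> x
  proof -
    have "{\<omega>\<in>space M. proj p \<gamma> \<psi> (X \<omega>) \<le> x} = (\<lambda>\<omega>. proj p \<gamma> \<psi> (X \<omega>)) -` {..x} \<inter> space M" by auto
    then have "{\<omega>\<in>space M. proj p \<gamma> \<psi> (X \<omega>) \<le> x} \<in> sets (vimage_algebra (space M) (\<lambda>\<omega>. proj p \<gamma> \<psi> (X \<omega>)) borel)"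
      unfolding sets_V by (intro CollectI exI[of _ "{..x}"]) simp
    then show ?thesis using H2 setint by simp
  qed
  have iii_i: "\<forall>A\<in>sets (sigma_L2 M X). (\<integral>\<omega>\<in>A. e \<omega> \<partial>M) = 0"
    if H3: "\<forall>p\<ge>1. \<forall>\<gamma>. \<forall>x::real. (\<Sum>i<p. (\<gamma> i)^2) = 1 \<longrightarrow>
                 (\<integral>\<omega>. e \<omega> * indicator {\<omega>\<in>space M. proj p \<gamma> \<psi> (X \<omega>) \<le> x} \<omega> \<partial>M) = 0"
  proof -
    have Hh: "(\<integral>\<omega>. e \<omega> * indicator {\<omega>\<in>space M. (\<Sum>j\<in>J. t j * Y j \<omega>) \<le> x} \<omega> \<partial>M) = 0"
      if J: "finite J" for J t x
    proof -
      define p where "p = Suc (Max (insert 0 J))"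
      have p1: "p \<ge> 1" by (simp add: p_def)
      have Jp: "J \<subseteq> {..<p}"
      proof
        fix j assume "j \<in> J"
        then have "j \<le> Max (insert 0 J)" using J by (intro Max_ge) auto
        then show "j \<in> {..<p}" by (simp add: p_def)
      qed
      define \<gamma>' where "\<gamma>' i = (if i \<in> J then t i else 0)" for i
      have sumeq: "(\<Sum>i<p. \<gamma>' i * Y i \<omega>) = (\<Sum>j\<in>J. t j * Y j \<omega>)" for \<omega>
      proof -
        have "(\<Sum>i<p. \<gamma>' i * Y i \<omega>) = (\<Sum>i\<in>{..<p}. if i \<in> J then t i * Y i \<omega> else 0)"
          by (intro sum.cong) (auto simp: \<gamma>'_def)
        also have "\<dots> = (\<Sum>i\<in>{..<p} \<inter> J. t i * Y i \<omega>)" by (simp add: sum.inter_restrict)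
        also have "{..<p} \<inter> J = J" using Jp by auto
        finally show ?thesis .
      qed
      define s where "s = (\<Sum>i<p. (\<gamma>' i)^2)"
      have s0: "0 \<le> s" unfolding s_def by (intro sum_nonneg) auto
      show ?thesis
      proof (cases "s = 0")
        case True
        then have "\<forall>i\<in>{..<p}. (\<gamma>' i)^2 = 0" unfolding s_def
          by (subst sum_nonneg_eq_0_iff[symmetric]) auto
        then have z: "(\<Sum>j\<in>J. t j * Y j \<omega>) = 0" for \<omega> using sumeq[of \<omega>, symmetric] by simp
        show ?thesis
        proof (cases "0 \<le> x")
          case True
          then have "(\<integral>\<omega>. e \<omega> * indicator {\<omega>\<in>space M. (\<Sum>j\<in>J. t j * Y j \<omega>) \<le> x} \<omega> \<partial>M) = (\<integral>\<omega>. e \<omega> \<partial>M)"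
            by (intro Bochner_Integration.integral_cong refl) (auto simp: z indicator_def)
          then show ?thesis using e0 by simp
        next
          case False
          then have "(\<integral>\<omega>. e \<omega> * indicator {\<omega>\<in>space M. (\<Sum>j\<in>J. t j * Y j \<omega>) \<le> x} \<omega> \<partial>M) = (\<integral>\<omega>. 0 \<partial>M)"
            by (intro Bochner_Integration.integral_cong refl) (auto simp: z indicator_def)
          then show ?thesis by simp
        qed
      next
        case False
        with s0 have sp: "s > 0" by simp
        define \<gamma> where "\<gamma> i = \<gamma>' i / sqrt s" for i
        have g1: "(\<Sum>i<p. (\<gamma> i)^2) = 1"
        proof -
          have "(\<Sum>i<p. (\<gamma> i)^2) = (\<Sum>i<p. (\<gamma>' i)^2 / s)" unfolding \<gamma>_def using sp by (simp add: power_divide)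
          also have "\<dots> = s / s" unfolding s_def by (rule sum_divide_distrib[symmetric])
          finally show ?thesis using sp by simp
        qed
        have pr: "proj p \<gamma> \<psi> (X \<omega>) = (\<Sum>j\<in>J. t j * Y j \<omega>) / sqrt s" for \<omega>
        proof -
          have "proj p \<gamma> \<psi> (X \<omega>) = (\<Sum>i<p. (\<gamma>' i * Y i \<omega>) / sqrt s)"
            unfolding projY \<gamma>_def by simp
          also have "\<dots> = (\<Sum>j\<in>J. t j * Y j \<omega>) / sqrt s" by (simp add: sum_divide_distrib[symmetric] sumeq)
          finally show ?thesis .
        qed
        have setq: "{\<omega>\<in>space M. (\<Sum>j\<in>J. t j * Y j \<omega>) \<le> x} = {\<omega>\<in>space M. proj p \<gamma> \<psi> (X \<omega>) \<le> x / sqrt s}"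
          using sp by (auto simp: pr divide_le_cancel)
        show ?thesis unfolding setq using H3 p1 g1 by blast
      qed
    qed
    have HI: "(\<integral>\<omega>. e \<omega> * indicator {\<omega>\<in>space M. \<forall>i\<in>I. Y i \<omega> \<le> x i} \<omega> \<partial>M) = 0" if "finite I" for I x
      by (rule multi_indicator[OF e Ym Hh that])
    define G where "G = {{\<omega>\<in>space M. \<forall>i\<in>I. Y i \<omega> \<le> x i} | I x. finite I}"
    have G_sub: "G \<subseteq> sets M" unfolding G_def by auto
    have G_pow: "G \<subseteq> Pow (space M)" unfolding G_def by auto
    have Om: "space M \<in> G" unfolding G_def by (rule CollectI, rule exI[of _ "{}"]) auto
    have G_int: "Int_stable G"
    proof (rule Int_stableI)
      fix a b assume "a \<in> G" "b \<in> G"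
      then obtain I1 x1 I2 x2 where a: "a = {\<omega>\<in>space M. \<forall>i\<in>I1. Y i \<omega> \<le> x1 i}" "finite I1"
        and b: "b = {\<omega>\<in>space M. \<forall>i\<in>I2. Y i \<omega> \<le> x2 i}" "finite I2"
        unfolding G_def by blast
      define x where "x i = (if i \<in> I1 \<and> i \<in> I2 then min (x1 i) (x2 i) else if i \<in> I1 then x1 i else x2 i)" for i
      have "a \<inter> b = {\<omega>\<in>space M. \<forall>i\<in>I1 \<union> I2. Y i \<omega> \<le> x i}"
        unfolding a b x_def by auto
      then show "a \<inter> b \<in> G" unfolding G_def using a(2) b(2) by blast
    qed
    have HG: "(\<integral>\<omega>\<in>A. e \<omega> \<partial>M) = 0" if "A \<in> G" for A
      using that HI setint unfolding G_def by auto
    have Gen_G: "Gen \<subseteq> sigma_sets (space M) G"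
    proof
      fix A assume "A \<in> Gen"
      then obtain g B where A: "A = (\<lambda>\<omega>. L2_inner (X \<omega>) g) -` B \<inter> space M" and g: "L2_01 g" and B: "B \<in> sets borel"
        unfolding Gen_def by blast
      let ?MG = "sigma (space M) G"
      have sMG: "sets ?MG = sigma_sets (space M) G" using G_pow by (rule sets_measure_of)
      have spMG: "space ?MG = space M" using G_pow by (rule space_measure_of)
      have YmG: "Y i \<in> borel_measurable ?MG" for i
      proof (subst borel_measurable_iff_le, intro allI)
        fix a
        have "{w \<in> space ?MG. Y i w \<le> a} = {\<omega>\<in>space M. \<forall>j\<in>{i}. Y j \<omega> \<le> (\<lambda>_. a) j}" using spMG by auto
        also have "\<dots> \<in> G" unfolding G_def
          by (rule CollectI, rule exI[of _ "{i}"], rule exI[of _ "\<lambda>_. a"]) simp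
        finally show "{w \<in> space ?MG. Y i w \<le> a} \<in> sets ?MG" unfolding sMG by (rule sigma_sets.Basic)
      qed
      have WmG: "(\<lambda>\<omega>. L2_inner (X \<omega>) g) \<in> borel_measurable ?MG"
      proof (rule borel_measurable_LIMSEQ_real)
        fix \<omega> assume "\<omega> \<in> space ?MG"
        then have "\<omega> \<in> space M" using spMG by simp
        then show "(\<lambda>p. \<Sum>i<p. L2_inner g (\<psi> i) * Y i \<omega>) \<longlonglongrightarrow> L2_inner (X \<omega>) g"
          unfolding Y_def using parseval_L2[OF onb XL2[rule_format] g] by simp
      next
        fix p
        show "(\<lambda>\<omega>. \<Sum>i<p. L2_inner g (\<psi> i) * Y i \<omega>) \<in> borel_measurable ?MG"
          using YmG by (intro borel_measurable_sum borel_measurable_times borel_measurable_const) auto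
      qed
      have "(\<lambda>\<omega>. L2_inner (X \<omega>) g) -` B \<inter> space ?MG \<in> sets ?MG"
        by (rule measurable_sets[OF WmG B])
      then show "A \<in> sigma_sets (space M) G" unfolding A using sMG spMG by simp
    qed
    show ?thesis
    proof
      fix A assume "A \<in> sets (sigma_L2 M X)"
      then have A': "A \<in> sigma_sets (space M) G" unfolding sets_F using sigma_sets_mono[OF Gen_G] by auto
      show "(\<integral>\<omega>\<in>A. e \<omega> \<partial>M) = 0"
        by (rule dynkin_zero[OF e G_int G_sub Om HG A'])
    qed
  qed
  let ?S1 = "\<forall>A\<in>sets (sigma_L2 M X). (\<integral>\<omega>\<in>A. e \<omega> \<partial>M) = 0"
  let ?S2 = "\<forall>p\<ge>1. \<forall>\<gamma>. (\<Sum>i<p. (\<gamma> i)^2) = 1 \<longrightarrow>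
     (\<forall>A\<in>sets (vimage_algebra (space M) (\<lambda>\<omega>. proj p \<gamma> \<psi> (X \<omega>)) borel). (\<integral>\<omega>\<in>A. e \<omega> \<partial>M) = 0)"
  let ?S3 = "\<forall>p\<ge>1. \<forall>\<gamma>. \<forall>x::real. (\<Sum>i<p. (\<gamma> i)^2) = 1 \<longrightarrow>
                 (\<integral>\<omega>. e \<omega> * indicator {\<omega>\<in>space M. proj p \<gamma> \<psi> (X \<omega>) \<le> x} \<omega> \<partial>M) = 0"
  have a: "?S2" if "?S1" using i_ii[OF that] by blast
  have b: "?S3" if "?S2" using ii_iii that by blast
  have c: "?S1" if "?S3" by (rule iii_i[OF that])
  have "(?S1 \<longleftrightarrow> ?S2) \<and> (?S2 \<longleftrightarrow> ?S3)" using a b c by blast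
  then show ?thesis unfolding C1 C2 .
qed


end
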